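(* Let $A,B\in\mathbb{R}_+^{m\times n}$ be a WN-pair. Let $\mathcal{E}(A,B)\subseteq\Pi_n$ be the set of vectors $\mathbf{w}$ satisfying the following five conditions, where $S=\operatorname{supp}\mathbf{w}$ and $\ell=|S|$: (i) $\ell\le m$; (ii) the set $\mathcal{I}$ of indices of zero rows of $B[[m],S]$ has $|\mathcal{I}|=m-\ell$ (so $B[[m]\setminus\mathcal{I},S]$ is a monomial matrix); (iii) $A[\mathcal{I},S]=0$; (iv) the matrix $C(\mathbf{w})=B[[m]\setminus\mathcal{I},S]^{-1}A[[m]\setminus\mathcal{I},S]$ is irreducible; (v) the vector $\mathbf{z}>\mathbf{0}$ in $\mathbb{R}^\ell$ obtained by restricting $\mathbf{w}$ to $S$ is a Perron–Frobenius eigenvector of $C(\mathbf{w})$. Then $\mathcal{E}(A,B)$ is finite; for each $\mathbf{w}\in\mathcal{E}(A,B)$ one has $\rho(C(\mathbf{w}))=r(A,B,\mathbf{w})$ and $A\mathbf{w}=\rho(C(\mathbf{w}))B\mathbf{w}$; and $$\hat\rho(A,B)=\min\{r(A,B,\mathbf{w}):\mathbf{w}\in\mathcal{E}(A,B)\}.$$ Moreover, a vector $\mathbf{y}\in\Pi_n$ is minimal weakly optimal if and only if $\mathbf{y}\in\mathcal{E}(A,B)$ and $\mathbf{y}$ attains this minimum; and every minimal weakly optimal vector is a weak GPF-eigenvector.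
   Context: $[m]=\{1,\dots,m\}$; $\Pi_n$ is the set of probability vectors in $\mathbb{R}^n$. For $F\in\mathbb{R}^{m\times n}$, $R\subseteq[m]$, $S\subseteq[n]$, $F[R,S]$ is the submatrix with rows in $R$ and columns in $S$. For $A,B\in\mathbb{R}_+^{m\times n}$ and $\mathbf{x}\in\mathbb{R}^n_+\setminus\{\mathbf{0}\}$, $r(A,B,\mathbf{x})=\max_{i\in[m]}\frac{(A\mathbf{x})_i}{(B\mathbf{x})_i}\in[0,\infty]$ (conventions $\frac00=0$, $\frac c0=\infty$ for $c>0$), and $\hat\rho(A,B)=\inf\{r(A,B,\mathbf{x}):\mathbf{x}\in\mathbb{R}^n_+\setminus\{\mathbf{0}\}\}$. A vector $\mathbf{y}\in\mathbb{R}^n_+\setminus\{\mathbf{0}\}$ is weakly optimal if $r(A,B,\mathbf{y})=\hat\rho(A,B)$, minimal weakly optimal if moreover no weakly optimal vector has support strictly contained in $\operatorname{supp}\mathbf{y}$, and a weak GPF-eigenvector if $A\mathbf{y}=\hat\rho(A,B)B\mathbf{y}$. A pair $A,B\in\mathbb{R}_+^{m\times n}$ is a WN-pair if $n\ge m$, $B$ has no zero row, and each column of $B$ has exactly one positive entry. A square nonnegative matrix is monomial if each row and each column has exactly one positive entry. A square nonnegative matrix $C=[c_{ij}]$ is irreducible if the digraph with an edge $i\to j$ iff $c_{ij}>0$ is strongly connected (a $1\times1$ matrix is irreducible). $\rho(C)$ is the spectral radius, and a Perron–Frobenius eigenvector is a nonnegative nonzero $\mathbf{z}$ with $C\mathbf{z}=\rho(C)\mathbf{z}$.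 *)

theory Defs
  imports "Jordan_Normal_Form.Spectral_Radius" "Jordan_Normal_Form.DL_Submatrix"
    "Jordan_Normal_Form.Gauss_Jordan_Elimination" "HOL-Library.Extended_Real"
begin

(* Matrices are JNF matrices, indices are 0-based: [m] is {0..<m}. *)

definition nonneg_mat :: "real mat \<Rightarrow> bool" where
  "nonneg_mat M \<longleftrightarrow> (\<forall>i<dim_row M. \<forall>j<dim_col M. M $$ (i,j) \<ge> 0)"

definition nonneg_vec :: "real vec \<Rightarrow> bool" where
  "nonneg_vec x \<longleftrightarrow> (\<forall>i<dim_vec x. x $ i \<ge> 0)"

definition prob_vecs :: "nat \<Rightarrow> real vec set" where
  "prob_vecs n = {x. x \<in> carrier_vec n \<and> nonneg_vec x \<and> (\<Sum>i<n. x $ i) = 1}"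

definition supp :: "real vec \<Rightarrow> nat set" where
  "supp x = {i. i < dim_vec x \<and> x $ i \<noteq> 0}"

definition ratio :: "real \<Rightarrow> real \<Rightarrow> ereal" where
  "ratio a b = (if b = 0 then (if a = 0 then 0 else \<infinity>) else ereal (a / b))"

definition r_fun :: "real mat \<Rightarrow> real mat \<Rightarrow> real vec \<Rightarrow> ereal" where
  "r_fun A B x = Max {ratio ((A *\<^sub>v x) $ i) ((B *\<^sub>v x) $ i) | i. i < dim_row A}"

definition rho_hat :: "real mat \<Rightarrow> real mat \<Rightarrow> ereal" where
  "rho_hat A B = Inf {r_fun A B x | x. x \<in> carrier_vec (dim_col A) \<and> nonneg_vec x
                        \<and> x \<noteq> 0\<^sub>v (dim_col A)}"

definition weakly_optimal :: "real mat \<Rightarrow> real mat \<Rightarrow> real vec \<Rightarrow> bool" where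
  "weakly_optimal A B y \<longleftrightarrow> y \<in> carrier_vec (dim_col A) \<and> nonneg_vec y
      \<and> y \<noteq> 0\<^sub>v (dim_col A) \<and> r_fun A B y = rho_hat A B"

definition min_weakly_optimal :: "real mat \<Rightarrow> real mat \<Rightarrow> real vec \<Rightarrow> bool" where
  "min_weakly_optimal A B y \<longleftrightarrow> weakly_optimal A B y
      \<and> \<not> (\<exists>y'. weakly_optimal A B y' \<and> supp y' \<subset> supp y)"

definition weak_GPF_eigenvector :: "real mat \<Rightarrow> real mat \<Rightarrow> real vec \<Rightarrow> bool" where
  "weak_GPF_eigenvector A B y \<longleftrightarrow> y \<in> carrier_vec (dim_col A) \<and> nonneg_vec y
      \<and> y \<noteq> 0\<^sub>v (dim_col A)
      \<and> (\<exists>\<rho>::real. rho_hat A B = ereal \<rho> \<and> A *\<^sub>v y = \<rho> \<cdot>\<^sub>v (B *\<^sub>v y))"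

definition WN_pair :: "nat \<Rightarrow> nat \<Rightarrow> real mat \<Rightarrow> real mat \<Rightarrow> bool" where
  "WN_pair m n A B \<longleftrightarrow> A \<in> carrier_mat m n \<and> B \<in> carrier_mat m n
      \<and> nonneg_mat A \<and> nonneg_mat B \<and> n \<ge> m
      \<and> (\<forall>i<m. \<exists>j<n. B $$ (i,j) \<noteq> 0)
      \<and> (\<forall>j<n. \<exists>!i. i < m \<and> B $$ (i,j) > 0)"

(* irreducibility of a square nonnegative matrix via strong connectivity of its digraph *)
definition irreducible_mat :: "real mat \<Rightarrow> bool" where
  "irreducible_mat C \<longleftrightarrow>
     (\<forall>i<dim_row C. \<forall>j<dim_row C.
        (i,j) \<in> {(a,b). a < dim_row C \<and> b < dim_row C \<and> C $$ (a,b) > 0}\<^sup>*)"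

definition spec_rad :: "real mat \<Rightarrow> real" where
  "spec_rad C = spectral_radius (map_mat complex_of_real C)"

definition PF_eigenvector :: "real mat \<Rightarrow> real vec \<Rightarrow> bool" where
  "PF_eigenvector C z \<longleftrightarrow> z \<in> carrier_vec (dim_row C) \<and> nonneg_vec z
      \<and> z \<noteq> 0\<^sub>v (dim_row C) \<and> C *\<^sub>v z = spec_rad C \<cdot>\<^sub>v z"

definition zero_rows :: "real mat \<Rightarrow> nat set \<Rightarrow> nat set" where
  "zero_rows B S = {i. i < dim_row B \<and> (\<forall>j\<in>S. B $$ (i,j) = 0)}"

definition C_mat :: "real mat \<Rightarrow> real mat \<Rightarrow> real vec \<Rightarrow> real mat" where
  "C_mat A B w = (let S = supp w; R = {0..<dim_row B} - zero_rows B S in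
      the (mat_inverse (submatrix B R S)) * submatrix A R S)"

(* restriction of w to its support S (in increasing order of indices) *)
definition restrict_supp :: "real vec \<Rightarrow> real vec" where
  "restrict_supp w = vec (card (supp w)) (\<lambda>i. w $ pick (supp w) i)"

definition E_set :: "real mat \<Rightarrow> real mat \<Rightarrow> real vec set" where
  "E_set A B = {w. w \<in> prob_vecs (dim_col A) \<and>
      (let S = supp w; l = card S; I = zero_rows B S in
         l \<le> dim_row A
       \<and> card I = dim_row A - l
       \<and> (\<forall>i\<in>I. \<forall>j\<in>S. A $$ (i,j) = 0)
       \<and> irreducible_mat (C_mat A B w)
       \<and> (\<forall>i<l. restrict_supp w $ i > 0)
       \<and> PF_eigenvector (C_mat A B w) (restrict_supp w))}"

end

theory Submission
  imports Defs
begin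

lemma ratio_le: fixes a b l :: real
  assumes "a \<ge> 0" "b \<ge> 0" "l \<ge> 0"
  shows "ratio a b \<le> ereal l \<longleftrightarrow> a \<le> l * b"
proof (cases "b = 0")
  case True
  then show ?thesis using assms by (auto simp: ratio_def)
next
  case False
  then have "b > 0" using assms by auto
  then show ?thesis by (auto simp: ratio_def pos_divide_le_eq mult.commute)
qed

lemma ratio_nonneg: fixes a b :: real
  assumes "a \<ge> 0" "b \<ge> 0" shows "ratio a b \<ge> 0"
  using assms by (auto simp: ratio_def)

locale wn =
  fixes A B :: "real mat" and m n :: nat
  assumes m0: "m > 0" and WN: "WN_pair m n A B"
begin

lemma A_carr: "A \<in> carrier_mat m n" and B_carr: "B \<in> carrier_mat m n"
  and A_nn: "i < m \<Longrightarrow> j < n \<Longrightarrow> A $$ (i,j) \<ge> 0"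
  and B_nn: "i < m \<Longrightarrow> j < n \<Longrightarrow> B $$ (i,j) \<ge> 0"
  and nm: "m \<le> n"
  and B_row: "i < m \<Longrightarrow> \<exists>j<n. B $$ (i,j) \<noteq> 0"
  and B_col: "j < n \<Longrightarrow> \<exists>!i. i < m \<and> B $$ (i,j) > 0"
  using WN unfolding WN_pair_def nonneg_mat_def by auto

lemma n0: "n > 0" using m0 nm by auto

definition own :: "nat \<Rightarrow> nat" where "own j = (THE i. i < m \<and> B $$ (i,j) > 0)"
definition bb :: "nat \<Rightarrow> real" where "bb j = B $$ (own j, j)"

lemma own: assumes "j < n" shows "own j < m" "bb j > 0"
proof -
  have "own j < m \<and> B $$ (own j, j) > 0"
    unfolding own_def by (rule theI', rule B_col[OF assms])
  then show "own j < m" "bb j > 0" unfolding bb_def by auto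
qed

lemma B_eq: assumes "j < n" "i < m"
  shows "B $$ (i,j) = (if i = own j then bb j else 0)"
proof (cases "i = own j")
  case True then show ?thesis unfolding bb_def by simp
next
  case False
  have u: "\<exists>!i. i < m \<and> B $$ (i,j) > 0" by (rule B_col[OF assms(1)])
  have "\<not> B $$ (i,j) > 0"
  proof
    assume h: "B $$ (i,j) > 0"
    have "own j < m" "B $$ (own j, j) > 0" using own[OF assms(1)] unfolding bb_def by auto
    from u obtain i0 where "\<forall>y. y < m \<and> B $$ (y,j) > 0 \<longrightarrow> y = i0" by (elim ex1E) simp
    then have "i = own j" using h assms(2) \<open>own j < m\<close> \<open>B $$ (own j, j) > 0\<close> by metis
    with False show False by simp
  qed
  with B_nn[OF assms(2,1)] False show ?thesis by auto
qed

definition Ax :: "nat \<Rightarrow> real vec \<Rightarrow> real" where "Ax i x = (\<Sum>j<n. A $$ (i,j) * x $ j)"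
definition Bx :: "nat \<Rightarrow> real vec \<Rightarrow> real" where "Bx i x = (\<Sum>j<n. B $$ (i,j) * x $ j)"

lemma mv_gen: assumes "i < dim_row M" "dim_col M = n" "dim_vec x = n"
  shows "(M *\<^sub>v x) $ i = (\<Sum>j<n. M $$ (i,j) * x $ j)"
  using assms by (simp add: index_mult_mat_vec scalar_prod_def atLeast0LessThan)

lemma A_mv: "i < m \<Longrightarrow> dim_vec x = n \<Longrightarrow> (A *\<^sub>v x) $ i = Ax i x"
  unfolding Ax_def by (rule mv_gen) (use A_carr in auto)
lemma B_mv: "i < m \<Longrightarrow> dim_vec x = n \<Longrightarrow> (B *\<^sub>v x) $ i = Bx i x"
  unfolding Bx_def by (rule mv_gen) (use B_carr in auto)

lemma Bx_own: assumes "i < m" shows "Bx i x = (\<Sum>j\<in>{j. j<n \<and> own j = i}. bb j * x $ j)"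
proof -
  have "Bx i x = (\<Sum>j<n. (if own j = i then bb j * x $ j else 0))"
    unfolding Bx_def by (rule sum.cong, auto simp: B_eq assms)
  also have "\<dots> = (\<Sum>j\<in>{j. j<n \<and> own j = i}. bb j * x $ j)"
    by (subst sum.If_cases) (auto intro!: sum.cong)
  finally show ?thesis .
qed

lemma Ax_nn: "nonneg_vec x \<Longrightarrow> dim_vec x = n \<Longrightarrow> i < m \<Longrightarrow> Ax i x \<ge> 0"
  unfolding Ax_def nonneg_vec_def by (auto intro!: sum_nonneg mult_nonneg_nonneg A_nn)
lemma Bx_nn: "nonneg_vec x \<Longrightarrow> dim_vec x = n \<Longrightarrow> i < m \<Longrightarrow> Bx i x \<ge> 0"
  unfolding Bx_def nonneg_vec_def by (auto intro!: sum_nonneg mult_nonneg_nonneg B_nn)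

lemma r_fun_eq: "r_fun A B x = Max ((\<lambda>i. ratio ((A *\<^sub>v x) $ i) ((B *\<^sub>v x) $ i)) ` {..<m})"
proof -
  have "{ratio ((A *\<^sub>v x) $ i) ((B *\<^sub>v x) $ i) | i. i < dim_row A}
     = (\<lambda>i. ratio ((A *\<^sub>v x) $ i) ((B *\<^sub>v x) $ i)) ` {..<m}" using A_carr
    by (auto simp del: index_mult_mat_vec)
  then show ?thesis unfolding r_fun_def by simp
qed

lemma rle: assumes "x \<in> carrier_vec n" "nonneg_vec x" "l \<ge> 0"
  shows "r_fun A B x \<le> ereal l \<longleftrightarrow> (\<forall>i<m. Ax i x \<le> l * Bx i x)"
proof -
  have d: "dim_vec x = n" using assms by auto
  have pt: "ratio ((A *\<^sub>v x) $ i) ((B *\<^sub>v x) $ i) \<le> ereal l \<longleftrightarrow> Ax i x \<le> l * Bx i x"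
    if i: "i < m" for i
    unfolding A_mv[OF i d] B_mv[OF i d]
    by (rule ratio_le[OF Ax_nn[OF assms(2) d i] Bx_nn[OF assms(2) d i] assms(3)])
  have "r_fun A B x \<le> ereal l \<longleftrightarrow> (\<forall>i\<in>{..<m}. ratio ((A *\<^sub>v x) $ i) ((B *\<^sub>v x) $ i) \<le> ereal l)"
    unfolding r_fun_eq using m0 by (subst Max_le_iff) auto
  also have "\<dots> \<longleftrightarrow> (\<forall>i<m. Ax i x \<le> l * Bx i x)"
    using pt by blast
  finally show ?thesis .
qed

lemma r_nonneg: assumes "x \<in> carrier_vec n" "nonneg_vec x" shows "r_fun A B x \<ge> 0"
proof -
  have d: "dim_vec x = n" using assms by auto
  have "0 \<le> ratio ((A *\<^sub>v x) $ 0) ((B *\<^sub>v x) $ 0)"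
    unfolding A_mv[OF m0 d] B_mv[OF m0 d]
    by (rule ratio_nonneg[OF Ax_nn[OF assms(2) d m0] Bx_nn[OF assms(2) d m0]])
  also have "\<dots> \<le> r_fun A B x" unfolding r_fun_eq using m0 by (intro Max_ge) auto
  finally show ?thesis .
qed

definition cand :: "real vec set" where
  "cand = {x. x \<in> carrier_vec n \<and> nonneg_vec x \<and> x \<noteq> 0\<^sub>v n}"

lemma rho_hat_eq: "rho_hat A B = Inf (r_fun A B ` cand)"
proof -
  have "{r_fun A B x | x. x \<in> carrier_vec (dim_col A) \<and> nonneg_vec x \<and> x \<noteq> 0\<^sub>v (dim_col A)}
     = r_fun A B ` cand" using A_carr unfolding cand_def by auto
  then show ?thesis unfolding rho_hat_def by simp
qed

lemma rho_le: "x \<in> cand \<Longrightarrow> rho_hat A B \<le> r_fun A B x"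
  unfolding rho_hat_eq by (rule Inf_lower) auto

definition u1 :: "real vec" where "u1 = vec n (\<lambda>_. 1)"

lemma u1: "u1 \<in> cand"
proof -
  have "u1 $ 0 = 1" using n0 unfolding u1_def by auto
  moreover have "(0\<^sub>v n :: real vec) $ 0 = 0" using n0 by auto
  ultimately have "u1 \<noteq> 0\<^sub>v n" by auto
  then show ?thesis unfolding cand_def u1_def nonneg_vec_def by auto
qed

lemma Bx_u1: "i < m \<Longrightarrow> Bx i u1 > 0"
proof -
  assume i: "i < m"
  obtain j where j: "j < n" "B $$ (i,j) \<noteq> 0" using B_row[OF i] by auto
  have "B $$ (i,j) * u1 $ j > 0" using j B_nn[OF i j(1)] unfolding u1_def by auto
  moreover have "B $$ (i,j) * u1 $ j \<le> Bx i u1" unfolding Bx_def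
    by (rule member_le_sum) (use j i B_nn in \<open>auto simp: u1_def\<close>)
  ultimately show ?thesis by auto
qed

definition lam :: real where "lam = real_of_ereal (rho_hat A B)"

lemma rho_fin: "rho_hat A B = ereal lam" and lam_nn: "lam \<ge> 0"
proof -
  define L where "L = (\<Sum>i<m. Ax i u1 / Bx i u1)"
  have u1n: "nonneg_vec u1" "u1 \<in> carrier_vec n" using u1 unfolding cand_def by auto
  have L: "Ax i u1 \<le> L * Bx i u1" if i: "i < m" for i
  proof -
    have "Ax i u1 / Bx i u1 \<le> L" unfolding L_def
      by (rule member_le_sum) (use i Ax_nn[OF u1n(1)] Bx_nn[OF u1n(1)] u1n in \<open>auto intro!: divide_nonneg_nonneg\<close>)
    then show ?thesis using Bx_u1[OF i] by (simp add: pos_divide_le_eq)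
  qed
  have L0: "L \<ge> 0" unfolding L_def using Ax_nn[OF u1n(1)] Bx_nn[OF u1n(1)] u1n
    by (auto intro!: sum_nonneg divide_nonneg_nonneg)
  have "r_fun A B u1 \<le> ereal L" using rle[OF u1n(2,1) L0] L by auto
  then have up: "rho_hat A B \<le> ereal L" using rho_le[OF u1] by auto
  have low: "rho_hat A B \<ge> 0" unfolding rho_hat_eq
    by (rule Inf_greatest) (auto simp: cand_def intro: r_nonneg)
  from up low show "rho_hat A B = ereal lam" unfolding lam_def
    by (cases "rho_hat A B") auto
  with low show "lam \<ge> 0" by auto
qed

definition feas :: "real \<Rightarrow> real vec \<Rightarrow> bool" where
  "feas l x \<longleftrightarrow> (\<forall>i<m. Ax i x \<le> l * Bx i x)"

lemma feas_lower: assumes "x \<in> cand" "l \<ge> 0" "feas l x" shows "lam \<le> l"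
proof -
  have xc: "x \<in> carrier_vec n" "nonneg_vec x" using assms(1) unfolding cand_def by auto
  have "r_fun A B x \<le> ereal l" unfolding rle[OF xc assms(2)] using assms(3) unfolding feas_def .
  then have "ereal lam \<le> ereal l" using rho_le[OF assms(1)] unfolding rho_fin by (rule order.trans[rotated])
  then show ?thesis by simp
qed

lemma WO_iff: "weakly_optimal A B y \<longleftrightarrow> y \<in> cand \<and> feas lam y"
proof
  assume w: "weakly_optimal A B y"
  then have c: "y \<in> cand" using A_carr unfolding weakly_optimal_def cand_def by auto
  then have yc: "y \<in> carrier_vec n" "nonneg_vec y" unfolding cand_def by auto
  from w have "r_fun A B y = ereal lam" unfolding weakly_optimal_def rho_fin by simp
  then have "r_fun A B y \<le> ereal lam" by simp
  then have "feas lam y" unfolding rle[OF yc lam_nn] feas_def .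
  with c show "y \<in> cand \<and> feas lam y" by simp
next
  assume a: "y \<in> cand \<and> feas lam y"
  then have yc: "y \<in> carrier_vec n" "nonneg_vec y" unfolding cand_def by auto
  have "r_fun A B y \<le> ereal lam" unfolding rle[OF yc lam_nn] using a unfolding feas_def by simp
  with rho_le[of y] a rho_fin have "r_fun A B y = rho_hat A B" by (metis antisym)
  with a show "weakly_optimal A B y" using A_carr unfolding weakly_optimal_def cand_def by auto
qed

end

lemma subseq_conv:
  fixes g :: "nat \<Rightarrow> nat \<Rightarrow> real"
  assumes b: "\<And>t i. \<bar>g t i\<bar> \<le> 1"
  shows "\<exists>r. strict_mono r \<and> (\<forall>i<K. convergent (\<lambda>t. g (r t) i))"
proof (induction K)
  case 0
  show ?case by (rule exI[of _ id]) (auto simp: strict_mono_def)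
next
  case (Suc K)
  then obtain r where r: "strict_mono r" "\<forall>i<K. convergent (\<lambda>t. g (r t) i)" by blast
  obtain s where s: "strict_mono s" "monoseq (\<lambda>t. g (r (s t)) K)"
    using seq_monosub[of "\<lambda>t. g (r t) K"] by blast
  have "Bseq (\<lambda>t. g (r (s t)) K)" using b by (intro BseqI'[of _ 1]) auto
  then have cK: "convergent (\<lambda>t. g (r (s t)) K)" using s(2) by (rule Bseq_monoseq_convergent)
  have "convergent (\<lambda>t. g (r (s t)) i)" if i: "i < Suc K" for i
  proof (cases "i = K")
    case True then show ?thesis using cK by simp
  next
    case False
    then have "i < K" using i by simp
    then obtain L where "(\<lambda>t. g (r t) i) \<longlonglongrightarrow> L" using r(2) convergent_def by blast
    from LIMSEQ_subseq_LIMSEQ[OF this s(1)] show ?thesis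
      unfolding convergent_def o_def by blast
  qed
  moreover have "strict_mono (\<lambda>t. r (s t))" using strict_mono_o[OF r(1) s(1)] by (simp add: o_def)
  ultimately show ?case by (intro exI[of _ "\<lambda>t. r (s t)"]) auto
qed

context wn begin

lemma Ax_smult: "dim_vec x = n \<Longrightarrow> Ax i (c \<cdot>\<^sub>v x) = c * Ax i x"
  unfolding Ax_def by (simp add: sum_distrib_left algebra_simps)
lemma Bx_smult: "dim_vec x = n \<Longrightarrow> Bx i (c \<cdot>\<^sub>v x) = c * Bx i x"
  unfolding Bx_def by (simp add: sum_distrib_left algebra_simps)

lemma cand_sum_pos: assumes "x \<in> cand" shows "(\<Sum>j<n. x $ j) > 0"
proof -
  have xc: "x \<in> carrier_vec n" "nonneg_vec x" "x \<noteq> 0\<^sub>v n" using assms unfolding cand_def by auto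
  obtain j where j: "j < n" "x $ j \<noteq> 0" using xc(1,3) by (metis eq_vecI carrier_vecD index_zero_vec)
  have nn: "\<And>k. k < n \<Longrightarrow> x $ k \<ge> 0" using xc unfolding nonneg_vec_def by auto
  have "x $ j \<le> (\<Sum>j<n. x $ j)" by (rule member_le_sum) (use j nn in auto)
  with nn[OF j(1)] j(2) show ?thesis by linarith
qed

lemma normalize: assumes "x \<in> cand"
  defines "x' \<equiv> (1 / (\<Sum>j<n. x $ j)) \<cdot>\<^sub>v x"
  shows "x' \<in> prob_vecs n" "x' \<in> cand" "supp x' = supp x"
    "\<And>l. feas l x \<Longrightarrow> feas l x'"
proof -
  let ?s = "\<Sum>j<n. x $ j"
  have s: "?s > 0" by (rule cand_sum_pos[OF assms(1)])
  have xc: "x \<in> carrier_vec n" "nonneg_vec x" "x \<noteq> 0\<^sub>v n" using assms unfolding cand_def by auto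
  have d: "dim_vec x = n" using xc by auto
  have ix: "\<And>j. j < n \<Longrightarrow> x' $ j = x $ j / ?s" unfolding x'_def using d by auto
  have nn: "nonneg_vec x'" using xc s ix d unfolding nonneg_vec_def x'_def by auto
  have "(\<Sum>j<n. x' $ j) = (\<Sum>j<n. x $ j / ?s)" by (rule sum.cong) (auto simp: ix)
  also have "\<dots> = 1" using s by (simp add: sum_divide_distrib[symmetric])
  finally have sum1: "(\<Sum>j<n. x' $ j) = 1" .
  have dx': "x' \<in> carrier_vec n" unfolding x'_def using xc by auto
  show "x' \<in> prob_vecs n" unfolding prob_vecs_def using dx' nn sum1 by auto
  have "x' \<noteq> 0\<^sub>v n"
  proof
    assume "x' = 0\<^sub>v n"
    then have "(\<Sum>j<n. x' $ j) = 0" by simp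
    with sum1 show False by simp
  qed
  then show "x' \<in> cand" unfolding cand_def using dx' nn by auto
  show "supp x' = supp x" unfolding supp_def using ix s d dx' by auto
  fix l assume "feas l x"
  then show "feas l x'" unfolding feas_def x'_def using Ax_smult[OF d] Bx_smult[OF d] s
    by (auto simp: divide_right_mono)
qed

lemma attain: "\<exists>x. weakly_optimal A B x"
proof -
  define dl :: "nat \<Rightarrow> real" where "dl k = lam + inverse (real (Suc k))" for k
  have ex: "\<exists>x. x \<in> prob_vecs n \<and> feas (dl k) x" for k
  proof -
    have "rho_hat A B < ereal (dl k)" unfolding rho_fin dl_def by simp
    then obtain x where x: "x \<in> cand" "r_fun A B x < ereal (dl k)"
      unfolding rho_hat_eq Inf_less_iff by auto
    have xc: "x \<in> carrier_vec n" "nonneg_vec x" using x unfolding cand_def by auto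
    have dk: "dl k \<ge> 0" unfolding dl_def using lam_nn by simp
    have "feas (dl k) x" unfolding feas_def rle[OF xc dk, symmetric] using x(2) by simp
    with normalize[OF x(1)] show ?thesis by blast
  qed
  then obtain f where f: "\<And>k. f k \<in> prob_vecs n \<and> feas (dl k) (f k)" by metis
  have fc: "f k \<in> carrier_vec n" "nonneg_vec (f k)" "(\<Sum>j<n. f k $ j) = 1" for k
    using f[of k] unfolding prob_vecs_def by auto
  have bnd: "\<bar>f k $ j\<bar> \<le> 1" if "j < n" for k j
  proof -
    have nn: "\<And>i. i < n \<Longrightarrow> f k $ i \<ge> 0" using fc(1,2)[of k] unfolding nonneg_vec_def by auto
    have "f k $ j \<le> (\<Sum>j<n. f k $ j)" by (rule member_le_sum) (use that nn in auto)
    with fc(3) nn[OF that] show ?thesis by simp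
  qed
  obtain r where r: "strict_mono r" "\<forall>j<n. convergent (\<lambda>t. (\<lambda>t j. if j < n then f t $ j else 0) (r t) j)"
    using subseq_conv[of "\<lambda>t j. if j < n then f t $ j else 0" n] bnd by fastforce
  define x where "x = vec n (\<lambda>j. lim (\<lambda>t. f (r t) $ j))"
  have conv: "(\<lambda>t. f (r t) $ j) \<longlonglongrightarrow> x $ j" if j: "j < n" for j
  proof -
    have "convergent (\<lambda>t. f (r t) $ j)" using r(2) j by auto
    then show ?thesis unfolding x_def using j by (simp add: convergent_LIMSEQ_iff)
  qed
  have xcar: "x \<in> carrier_vec n" unfolding x_def by simp
  have xnn: "nonneg_vec x" unfolding nonneg_vec_def
  proof (intro allI impI)
    fix j assume "j < dim_vec x"
    then have j: "j < n" using xcar by auto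
    have "\<forall>k. f k $ j \<ge> 0"
    proof
      fix k have "dim_vec (f k) = n" using fc(1)[of k] by auto
      then show "f k $ j \<ge> 0" using fc(2)[of k] j unfolding nonneg_vec_def by auto
    qed
    then show "x $ j \<ge> 0"
      by (intro LIMSEQ_le_const[OF conv[OF j]]) auto
  qed
  have "(\<lambda>t. \<Sum>j<n. f (r t) $ j) \<longlonglongrightarrow> (\<Sum>j<n. x $ j)"
    by (rule tendsto_sum) (use conv in auto)
  moreover have "(\<lambda>t. \<Sum>j<n. f (r t) $ j) = (\<lambda>t. 1)" using fc(3) by simp
  ultimately have "(\<Sum>j<n. x $ j) = 1" using LIMSEQ_unique tendsto_const by metis
  then have "x \<noteq> 0\<^sub>v n" by auto
  then have xc: "x \<in> cand" unfolding cand_def using xcar xnn by auto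
  have AxC: "(\<lambda>t. Ax i (f (r t))) \<longlonglongrightarrow> Ax i x" for i
    unfolding Ax_def by (intro tendsto_sum tendsto_mult tendsto_const) (use conv in auto)
  have BxC: "(\<lambda>t. Bx i (f (r t))) \<longlonglongrightarrow> Bx i x" for i
    unfolding Bx_def by (intro tendsto_sum tendsto_mult tendsto_const) (use conv in auto)
  have dlC: "(\<lambda>t. dl (r t)) \<longlonglongrightarrow> lam"
    using LIMSEQ_subseq_LIMSEQ[OF LIMSEQ_inverse_real_of_nat_add[of lam] r(1)]
    unfolding dl_def o_def .
  have "feas lam x" unfolding feas_def
  proof (intro allI impI)
    fix i assume i: "i < m"
    have "(\<lambda>t. Ax i (f (r t)) - dl (r t) * Bx i (f (r t))) \<longlonglongrightarrow> Ax i x - lam * Bx i x"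
      by (intro tendsto_diff tendsto_mult AxC BxC dlC)
    moreover have "\<forall>t. Ax i (f (r t)) - dl (r t) * Bx i (f (r t)) \<le> 0"
      using f i unfolding feas_def by auto
    ultimately have "Ax i x - lam * Bx i x \<le> 0"
      by (intro LIMSEQ_le_const2) auto
    then show "Ax i x \<le> lam * Bx i x" by simp
  qed
  with xc show ?thesis using WO_iff by blast
qed

end

lemma cross_edge:
  assumes "(u,v) \<in> R\<^sup>*" "u \<notin> X" "v \<in> X"
  shows "\<exists>a b. (a,b) \<in> R \<and> a \<notin> X \<and> b \<in> X"
  using assms
proof (induction rule: converse_rtrancl_induct)
  case base then show ?case by simp
next
  case (step u u')
  then show ?case by (cases "u' \<in> X") auto
qed

context wn begin

lemma cand_nn: "x \<in> cand \<Longrightarrow> j < n \<Longrightarrow> x $ j \<ge> 0"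
  unfolding cand_def nonneg_vec_def by auto
lemma cand_dim: "x \<in> cand \<Longrightarrow> dim_vec x = n"
  unfolding cand_def by auto
lemma supp_iff: "x \<in> cand \<Longrightarrow> j \<in> supp x \<longleftrightarrow> j < n \<and> x $ j \<noteq> 0"
  unfolding supp_def cand_def by auto
lemma supp_pos: "x \<in> cand \<Longrightarrow> j \<in> supp x \<Longrightarrow> x $ j > 0"
  using cand_nn supp_iff by force
lemma supp_lt: "x \<in> cand \<Longrightarrow> j \<in> supp x \<Longrightarrow> j < n"
  using supp_iff by blast
lemma supp_ne: "x \<in> cand \<Longrightarrow> supp x \<noteq> {}"
proof
  assume x: "x \<in> cand" and e: "supp x = {}"
  have "x = 0\<^sub>v n"
  proof (rule eq_vecI)
    show "dim_vec x = dim_vec (0\<^sub>v n)" using cand_dim[OF x] by simp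
    fix j assume "j < dim_vec (0\<^sub>v n)"
    then have "j < n" by simp
    then show "x $ j = 0\<^sub>v n $ j" using e supp_iff[OF x, of j] by auto
  qed
  with x show False unfolding cand_def by auto
qed
lemma supp_fin: "finite (supp x)" unfolding supp_def by auto

lemma Bx_zero: assumes "i < m" "\<And>j. j < n \<Longrightarrow> own j = i \<Longrightarrow> x $ j = 0" shows "Bx i x = 0"
  unfolding Bx_own[OF assms(1)] using assms(2) by (intro sum.neutral) auto

lemma Bx_ge: assumes x: "x \<in> cand" and j: "j < n" shows "Bx (own j) x \<ge> bb j * x $ j"
proof -
  have "bb j * x $ j \<le> (\<Sum>j\<in>{k. k<n \<and> own k = own j}. bb j * x $ j)"
    by (rule member_le_sum) (use j x in \<open>auto intro!: mult_nonneg_nonneg cand_nn less_imp_le[OF own(2)]\<close>)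
  then show ?thesis unfolding Bx_own[OF own(1)[OF j]] .
qed

lemma Bx_pos: assumes x: "x \<in> cand" and j: "j \<in> supp x" shows "Bx (own j) x > 0"
proof -
  have jn: "j < n" using supp_lt[OF x j] .
  have "bb j * x $ j > 0" using own(2)[OF jn] supp_pos[OF x j] by simp
  with Bx_ge[OF x jn] show ?thesis by linarith
qed

lemma Bx_pos_iff: assumes x: "x \<in> cand" "i < m" shows "Bx i x > 0 \<longleftrightarrow> i \<in> own ` supp x"
proof
  assume "Bx i x > 0"
  show "i \<in> own ` supp x"
  proof (rule ccontr)
    assume "i \<notin> own ` supp x"
    then have "Bx i x = 0" using x supp_iff by (intro Bx_zero) force+
    with \<open>Bx i x > 0\<close> show False by simp
  qed
next
  assume "i \<in> own ` supp x"
  then show "Bx i x > 0" using Bx_pos[OF x(1)] by auto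
qed

lemma Ax_vec_lin: "Ax i (vec n (\<lambda>j. x $ j + t * w $ j)) = Ax i x + t * Ax i w"
proof -
  have "Ax i (vec n (\<lambda>j. x $ j + t * w $ j)) = (\<Sum>j<n. A $$ (i,j) * x $ j + t * (A $$ (i,j) * w $ j))"
    unfolding Ax_def by (rule sum.cong) (auto simp: algebra_simps)
  then show ?thesis unfolding Ax_def by (simp add: sum.distrib sum_distrib_left)
qed
lemma Bx_vec_lin: "Bx i (vec n (\<lambda>j. x $ j + t * w $ j)) = Bx i x + t * Bx i w"
proof -
  have "Bx i (vec n (\<lambda>j. x $ j + t * w $ j)) = (\<Sum>j<n. B $$ (i,j) * x $ j + t * (B $$ (i,j) * w $ j))"
    unfolding Bx_def by (rule sum.cong) (auto simp: algebra_simps)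
  then show ?thesis unfolding Bx_def by (simp add: sum.distrib sum_distrib_left)
qed

lemma low: assumes x: "x \<in> cand"
  and st: "\<And>i. i < m \<Longrightarrow> Bx i x > 0 \<Longrightarrow> Ax i x < lam * Bx i x"
  and z: "\<And>i. i < m \<Longrightarrow> Bx i x = 0 \<Longrightarrow> Ax i x = 0"
  shows False
proof -
  have d: "dim_vec x = n" using cand_dim[OF x] .
  have xn: "nonneg_vec x" using x unfolding cand_def by auto
  define Q where "Q = {i. i < m \<and> Bx i x > 0}"
  define l where "l = Max (insert 0 ((\<lambda>i. Ax i x / Bx i x) ` Q))"
  have fQ: "finite Q" unfolding Q_def by auto
  have l0: "l \<ge> 0" unfolding l_def using fQ by simp
  obtain j where "j \<in> supp x" using supp_ne[OF x] by auto
  then have "own j \<in> Q" unfolding Q_def using Bx_pos[OF x] own supp_lt[OF x] by auto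
  then have Qne: "Q \<noteq> {}" by auto
  have "lam > 0"
  proof -
    obtain i where i: "i \<in> Q" using Qne by auto
    then have "Ax i x < lam * Bx i x" "Bx i x > 0" "i < m" using st unfolding Q_def by auto
    moreover have "Ax i x \<ge> 0" using Ax_nn[OF xn d \<open>i < m\<close>] .
    ultimately show ?thesis by (smt (verit) mult_nonpos_nonneg)
  qed
  have "l < lam" unfolding l_def
  proof (subst Max_less_iff)
    show "finite (insert 0 ((\<lambda>i. Ax i x / Bx i x) ` Q))" using fQ by simp
    show "insert 0 ((\<lambda>i. Ax i x / Bx i x) ` Q) \<noteq> {}" by simp
    show "\<forall>a\<in>insert 0 ((\<lambda>i. Ax i x / Bx i x) ` Q). a < lam"
    proof
      fix a assume "a \<in> insert 0 ((\<lambda>i. Ax i x / Bx i x) ` Q)"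
      then show "a < lam"
      proof
        assume "a = 0" then show ?thesis using \<open>lam > 0\<close> by simp
      next
        assume "a \<in> (\<lambda>i. Ax i x / Bx i x) ` Q"
        then obtain i where i: "i \<in> Q" "a = Ax i x / Bx i x" by auto
        then have "Ax i x < lam * Bx i x" "Bx i x > 0" using st unfolding Q_def by auto
        then show "a < lam" using i(2) by (simp add: pos_divide_less_eq)
      qed
    qed
  qed
  have "feas l x" unfolding feas_def
  proof (intro allI impI)
    fix i assume i: "i < m"
    show "Ax i x \<le> l * Bx i x"
    proof (cases "Bx i x > 0")
      case True
      then have "i \<in> Q" unfolding Q_def using i by auto
      then have "Ax i x / Bx i x \<le> l" unfolding l_def using fQ by (intro Max_ge) auto
      then show ?thesis using True by (simp add: pos_divide_le_eq)
    next
      case False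
      then have "Bx i x = 0" using Bx_nn[OF xn d i] by simp
      then show ?thesis using z[OF i] by simp
    qed
  qed
  from feas_lower[OF x l0 this] \<open>l < lam\<close> show False by simp
qed

definition Pr :: "real vec \<Rightarrow> nat set" where "Pr y = own ` supp y"
definition Ed :: "real vec \<Rightarrow> (nat \<times> nat) set" where
  "Ed y = {(r, r'). r \<in> Pr y \<and> r' \<in> Pr y \<and> (\<exists>j\<in>supp y. own j = r' \<and> A $$ (r,j) > 0)}"

lemma Pr_lt: "y \<in> cand \<Longrightarrow> r \<in> Pr y \<Longrightarrow> r < m"
  unfolding Pr_def using own supp_lt by auto

lemma offP: assumes y: "y \<in> cand" "feas lam y" and i: "i < m" "i \<notin> Pr y"
  shows "Bx i y = 0" "Ax i y = 0" "\<And>j. j \<in> supp y \<Longrightarrow> A $$ (i,j) = 0"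
proof -
  have d: "dim_vec y = n" using cand_dim[OF y(1)] .
  have yn: "nonneg_vec y" using y unfolding cand_def by auto
  have "\<not> 0 < Bx i y" using Bx_pos_iff[OF y(1) i(1)] i(2) unfolding Pr_def by simp
  then show b: "Bx i y = 0" using Bx_nn[OF yn d i(1)] by simp
  have "Ax i y \<le> 0" using y(2) i b unfolding feas_def by auto
  with Ax_nn[OF yn d i(1)] show a: "Ax i y = 0" by simp
  fix j assume j: "j \<in> supp y"
  have jn: "j < n" using supp_lt[OF y(1) j] .
  have "\<forall>k\<in>{..<n}. A $$ (i,k) * y $ k = 0"
    using a unfolding Ax_def
    by (subst sum_nonneg_eq_0_iff[symmetric]) (use A_nn i cand_nn[OF y(1)] in auto)
  then have "A $$ (i,j) * y $ j = 0" using jn by auto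
  then show "A $$ (i,j) = 0" using supp_pos[OF y(1) j] by simp
qed

lemma minWO_D: assumes "min_weakly_optimal A B y"
  shows "y \<in> cand" "feas lam y" "\<And>x. x \<in> cand \<Longrightarrow> feas lam x \<Longrightarrow> supp x \<subseteq> supp y \<Longrightarrow> supp x = supp y"
  using assms unfolding min_weakly_optimal_def WO_iff by auto

lemma strong: assumes mw: "min_weakly_optimal A B y"
  and r: "r \<in> Pr y" and r': "r' \<in> Pr y"
  shows "(r', r) \<in> (Ed y)\<^sup>*"
proof -
  note y = minWO_D[OF mw]
  define D where "D = {q \<in> Pr y. (q, r) \<in> (Ed y)\<^sup>*}"
  define x where "x = vec n (\<lambda>j. if own j \<in> D then y $ j else 0)"
  have ix: "\<And>j. j < n \<Longrightarrow> x $ j = (if own j \<in> D then y $ j else 0)" unfolding x_def by simp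
  have xcar: "x \<in> carrier_vec n" unfolding x_def by simp
  have xnn: "nonneg_vec x" unfolding nonneg_vec_def using ix cand_nn[OF y(1)] xcar by auto
  obtain j0 where j0: "j0 \<in> supp y" "own j0 = r" using r unfolding Pr_def by auto
  have "r \<in> D" unfolding D_def using r by simp
  then have "x $ j0 = y $ j0" using ix j0 supp_lt[OF y(1)] by auto
  then have "x $ j0 \<noteq> 0" using supp_pos[OF y(1) j0(1)] by simp
  then have "x \<noteq> 0\<^sub>v n" using j0 supp_lt[OF y(1)] by auto
  then have xc: "x \<in> cand" unfolding cand_def using xcar xnn by auto
  have le: "Ax i x \<le> Ax i y" if "i < m" for i
    unfolding Ax_def
    by (rule sum_mono) (use that ix cand_nn[OF y(1)] A_nn in \<open>auto intro: mult_left_mono\<close>)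
  have "feas lam x" unfolding feas_def
  proof (intro allI impI)
    fix i assume i: "i < m"
    show "Ax i x \<le> lam * Bx i x"
    proof (cases "i \<in> D")
      case True
      have "Bx i x = Bx i y" unfolding Bx_own[OF i] using ix True by (intro sum.cong) auto
      then show ?thesis using le[OF i] y(2) i unfolding feas_def by fastforce
    next
      case False
      have "Ax i x = 0" unfolding Ax_def
      proof (rule sum.neutral, intro ballI)
        fix j assume "j \<in> {..<n}"
        then have j: "j < n" by simp
        show "A $$ (i,j) * x $ j = 0"
        proof (cases "own j \<in> D \<and> y $ j \<noteq> 0")
          case False then show ?thesis using ix[OF j] by auto
        next
          case True
          then have js: "j \<in> supp y" using j supp_iff[OF y(1)] by auto
          show ?thesis
          proof (cases "i \<in> Pr y")
            case iP: True
            have "\<not> A $$ (i,j) > 0"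
            proof
              assume "A $$ (i,j) > 0"
              then have "(i, own j) \<in> Ed y" unfolding Ed_def using iP True js D_def by auto
              moreover have "(own j, r) \<in> (Ed y)\<^sup>*" using True D_def by auto
              ultimately have "(i, r) \<in> (Ed y)\<^sup>*" by (rule converse_rtrancl_into_rtrancl)
              then have "i \<in> D" unfolding D_def using iP by auto
              with False show False by simp
            qed
            then have "A $$ (i,j) = 0" using A_nn[OF i j] by simp
            then show ?thesis by simp
          next
            case iP: False
            then show ?thesis using offP(3)[OF y(1,2) i iP js] by simp
          qed
        qed
      qed
      then show ?thesis using Bx_nn[OF xnn _ i] xcar lam_nn by auto
    qed
  qed
  have "supp x \<subseteq> supp y" unfolding supp_def using ix xcar y(1) cand_dim by (auto split: if_splits)
  then have eq: "supp x = supp y" using y(3)[OF xc \<open>feas lam x\<close>] by simp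
  obtain j' where j': "j' \<in> supp y" "own j' = r'" using r' unfolding Pr_def by auto
  then have "j' \<in> supp x" using eq by simp
  then have "x $ j' \<noteq> 0" unfolding supp_def by simp
  then have "own j' \<in> D" using ix supp_lt[OF y(1) j'(1)] by (auto split: if_splits)
  then show ?thesis unfolding D_def using j' by auto
qed

end

context wn begin

lemma tight: assumes mw: "min_weakly_optimal A B y"
  shows "\<And>i. i < m \<Longrightarrow> Ax i y = lam * Bx i y"
proof -
  note y = minWO_D[OF mw]
  define S where "S = supp y"
  define P where "P = Pr y"
  define N where "N x = {i \<in> P. Ax i x < lam * Bx i x}" for x
  define V where "V = {x. x \<in> cand \<and> supp x = S \<and> feas lam x}"
  have fP: "finite P" unfolding P_def Pr_def using supp_fin by simp
  have NP: "N x \<subseteq> P" for x unfolding N_def by auto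
  have yV: "y \<in> V" unfolding V_def S_def using y by auto
  have "\<exists>k. (\<exists>x\<in>V. card (N x) = k) \<and> (\<forall>k'. (\<exists>x\<in>V. card (N x) = k') \<longrightarrow> k' \<le> k)"
  proof (rule Nat.ex_has_greatest_nat[of _ "card (N y)" "card P"])
    show "\<exists>x\<in>V. card (N x) = card (N y)" using yV by auto
    show "\<forall>k'. (\<exists>x\<in>V. card (N x) = k') \<longrightarrow> k' \<le> card P"
      using NP fP card_mono by blast
  qed
  then obtain x0 where x0: "x0 \<in> V" and mx: "\<And>x. x \<in> V \<Longrightarrow> card (N x) \<le> card (N x0)"
    by blast
  have x0c: "x0 \<in> cand" "supp x0 = S" "feas lam x0" using x0 unfolding V_def by auto
  have d0: "dim_vec x0 = n" using cand_dim[OF x0c(1)] .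
  have x0n: "nonneg_vec x0" using x0c unfolding cand_def by auto
  have PS: "P = own ` supp x0" unfolding P_def Pr_def using x0c S_def by simp
  have N0: "N x0 = {}"
  proof (rule ccontr)
    assume ne: "N x0 \<noteq> {}"
    show False
    proof (cases "N x0 = P")
      case True
      show False
      proof (rule low[OF x0c(1)])
        fix i assume i: "i < m" "Bx i x0 > 0"
        then have "i \<in> P" using Bx_pos_iff[OF x0c(1) i(1)] PS by simp
        then show "Ax i x0 < lam * Bx i x0" using True unfolding N_def by auto
      next
        fix i assume i: "i < m" "Bx i x0 = 0"
        then show "Ax i x0 = 0" using x0c(3) Ax_nn[OF x0n d0 i(1)] unfolding feas_def by force
      qed
    next
      case False
      then obtain a0 where a0: "a0 \<in> P" "a0 \<notin> N x0" using NP by blast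
      obtain b0 where b0: "b0 \<in> N x0" using ne by auto
      have "(a0, b0) \<in> (Ed y)\<^sup>*" using strong[OF mw] b0 a0 NP unfolding P_def by blast
      from cross_edge[OF this a0(2) b0] obtain a b where
        ab: "(a,b) \<in> Ed y" "a \<notin> N x0" "b \<in> N x0" by blast
      from ab(1) obtain j1 where j1: "j1 \<in> S" "own j1 = b" "A $$ (a,j1) > 0" "a \<in> P" "b \<in> P"
        unfolding Ed_def S_def P_def by auto
      have am: "a < m" and bm: "b < m" using Pr_lt[OF y(1)] j1(4,5) unfolding P_def by auto
      have ab_ne: "a \<noteq> b" using ab by auto
      have bstrict: "Ax b x0 < lam * Bx b x0" using ab(3) unfolding N_def by auto
      have Axb: "Ax b x0 \<ge> 0" using Ax_nn[OF x0n d0 bm] .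
      define D where "D = lam * Bx b x0"
      have Dp: "D > 0" unfolding D_def using bstrict Axb by linarith
      define eps where "eps = (D - Ax b x0) / (2 * D)"
      have e0: "eps > 0" unfolding eps_def using Dp bstrict D_def by simp
      have e1: "eps < 1"
      proof -
        have "D - Ax b x0 < 2 * D" using Axb Dp by linarith
        then show ?thesis unfolding eps_def using Dp by simp
      qed
      have keyb: "Ax b x0 < lam * ((1 - eps) * Bx b x0)"
      proof -
        have "lam * ((1 - eps) * Bx b x0) = (1 - eps) * D" unfolding D_def by simp
        also have "\<dots> = D - (D - Ax b x0) / 2" unfolding eps_def using Dp by (simp add: field_simps)
        finally show ?thesis using bstrict D_def by (simp add: field_simps)
      qed
      define x' where "x' = vec n (\<lambda>j. if own j = b then (1 - eps) * x0 $ j else x0 $ j)"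
      have ix: "\<And>j. j < n \<Longrightarrow> x' $ j = (if own j = b then (1 - eps) * x0 $ j else x0 $ j)"
        unfolding x'_def by simp
      have x'car: "x' \<in> carrier_vec n" unfolding x'_def by simp
      have x'nn: "nonneg_vec x'" unfolding nonneg_vec_def using ix x'car cand_nn[OF x0c(1)] e1 by auto
      have sx': "supp x' = S"
      proof -
        have "\<And>j. j < n \<Longrightarrow> x' $ j \<noteq> 0 \<longleftrightarrow> x0 $ j \<noteq> 0" using ix e1 by auto
        then show ?thesis unfolding supp_def using x'car d0 x0c(2)[symmetric] unfolding supp_def by auto
      qed
      have "x' \<noteq> 0\<^sub>v n"
      proof
        assume "x' = 0\<^sub>v n"
        then have "supp x' = {}" unfolding supp_def by auto
        with sx' x0c supp_ne show False by auto
      qed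
      then have x'c: "x' \<in> cand" unfolding cand_def using x'car x'nn by auto
      have Bx': "Bx i x' = (if i = b then (1 - eps) * Bx i x0 else Bx i x0)" if i: "i < m" for i
      proof (cases "i = b")
        case True
        have "Bx i x' = (\<Sum>j\<in>{j. j<n \<and> own j = i}. (1 - eps) * (bb j * x0 $ j))"
          unfolding Bx_own[OF i] using True ix by (intro sum.cong) auto
        also have "\<dots> = (1 - eps) * Bx i x0" unfolding Bx_own[OF i] by (simp add: sum_distrib_left)
        finally show ?thesis using True by simp
      next
        case False
        have "Bx i x' = Bx i x0" unfolding Bx_own[OF i] using False ix by (intro sum.cong) auto
        then show ?thesis using False by simp
      qed
      have Axle: "Ax i x' \<le> Ax i x0" if i: "i < m" for i
        unfolding Ax_def
      proof (rule sum_mono)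
        fix j assume "j \<in> {..<n}"
        then have j: "j < n" by simp
        have "x' $ j \<le> x0 $ j" using ix[OF j] e0 cand_nn[OF x0c(1) j] by (auto simp: algebra_simps)
        then show "A $$ (i,j) * x' $ j \<le> A $$ (i,j) * x0 $ j" using A_nn[OF i j] by (rule mult_left_mono)
      qed
      have Axa: "Ax a x' < Ax a x0" unfolding Ax_def
      proof (rule sum_strict_mono_ex1)
        show "finite {..<n}" by simp
        show "\<forall>j\<in>{..<n}. A $$ (a,j) * x' $ j \<le> A $$ (a,j) * x0 $ j"
        proof
          fix j assume "j \<in> {..<n}"
          then have j: "j < n" by simp
          have "x' $ j \<le> x0 $ j" using ix[OF j] e0 cand_nn[OF x0c(1) j] by (auto simp: algebra_simps)
          then show "A $$ (a,j) * x' $ j \<le> A $$ (a,j) * x0 $ j" using A_nn[OF am j] by (rule mult_left_mono)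
        qed
        have j1n: "j1 < n" using supp_lt[OF x0c(1)] j1(1) x0c(2) by auto
        have pos: "x0 $ j1 > 0" using supp_pos[OF x0c(1)] j1(1) x0c(2) by auto
        have "x' $ j1 < x0 $ j1" using ix[OF j1n] j1(2) e0 pos by (simp add: algebra_simps, smt (verit) mult_pos_pos)
        then have "A $$ (a,j1) * x' $ j1 < A $$ (a,j1) * x0 $ j1" using j1(3) by simp
        then show "\<exists>j\<in>{..<n}. A $$ (a,j) * x' $ j < A $$ (a,j) * x0 $ j" using j1n by auto
      qed
      have feas': "feas lam x'" unfolding feas_def
      proof (intro allI impI)
        fix i assume i: "i < m"
        show "Ax i x' \<le> lam * Bx i x'"
        proof (cases "i = b")
          case True
          then show ?thesis using Axle[OF i] keyb Bx'[OF i] by simp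
        next
          case False
          then show ?thesis using Axle[OF i] x0c(3) i Bx'[OF i] unfolding feas_def by fastforce
        qed
      qed
      have x'V: "x' \<in> V" unfolding V_def using x'c sx' feas' by auto
      have sub: "insert a (N x0) \<subseteq> N x'"
      proof
        fix i assume "i \<in> insert a (N x0)"
        then show "i \<in> N x'"
        proof
          assume ia: "i = a"
          have "Ax a x' < lam * Bx a x'" using Axa x0c(3) am Bx'[OF am] ab_ne unfolding feas_def by fastforce
          then show ?thesis using ia j1(4) unfolding N_def by auto
        next
          assume iN: "i \<in> N x0"
          then have iP: "i \<in> P" and st: "Ax i x0 < lam * Bx i x0" unfolding N_def by auto
          have im: "i < m" using Pr_lt[OF y(1)] iP unfolding P_def by auto
          show ?thesis
          proof (cases "i = b")
            case True
            then show ?thesis using Axle[OF im] keyb Bx'[OF im] iP unfolding N_def by auto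
          next
            case False
            then show ?thesis using Axle[OF im] st Bx'[OF im] iP unfolding N_def by auto
          qed
        qed
      qed
      have "card (N x0) < card (N x')"
      proof (rule psubset_card_mono)
        show "finite (N x')" using NP fP finite_subset by blast
        show "N x0 \<subset> N x'" using sub ab(2) by auto
      qed
      with mx[OF x'V] show False by simp
    qed
  qed
  have "card (N y) \<le> card (N x0)" using mx[OF yV] .
  then have "card (N y) = 0" using N0 by simp
  then have Ny: "N y = {}" using NP fP finite_subset by (metis card_0_eq)
  fix i assume i: "i < m"
  show "Ax i y = lam * Bx i y"
  proof (cases "i \<in> P")
    case True
    then show ?thesis using Ny y(2) i unfolding N_def feas_def by force
  next
    case False
    then show ?thesis using offP[OF y(1,2) i] unfolding P_def by simp
  qed
qed

end

context wn begin

lemma inj_own: assumes mw: "min_weakly_optimal A B y"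
  shows "inj_on own (supp y)"
proof (rule ccontr)
  assume ninj: "\<not> inj_on own (supp y)"
  note y = minWO_D[OF mw]
  note ti = tight[OF mw]
  define S where "S = supp y"
  define P where "P = own ` S"
  define tau where "tau q = (LEAST j. j \<in> S \<and> own j = q)" for q
  have tau: "tau q \<in> S" "own (tau q) = q" if "q \<in> P" for q
  proof -
    have "\<exists>j. j \<in> S \<and> own j = q" using that unfolding P_def by auto
    from LeastI_ex[OF this] show "tau q \<in> S" "own (tau q) = q" unfolding tau_def by auto
  qed
  define T where "T = tau ` P"
  have TS: "T \<subseteq> S" unfolding T_def using tau by auto
  have Tn: "j \<in> T \<Longrightarrow> j < n" for j using TS supp_lt[OF y(1)] unfolding S_def by auto
  have Tt: "j \<in> T \<Longrightarrow> own j \<in> P \<and> tau (own j) = j" for j unfolding T_def using tau by auto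
  obtain j1 j2 where j12: "j1 \<in> S" "j2 \<in> S" "j1 \<noteq> j2" "own j1 = own j2"
    using ninj unfolding inj_on_def S_def by auto
  have "\<not> (j1 \<in> T \<and> j2 \<in> T)"
  proof
    assume "j1 \<in> T \<and> j2 \<in> T"
    then have "j1 = tau (own j1)" "j2 = tau (own j2)" using Tt by auto
    then show False using j12 by simp
  qed
  then obtain js where js: "js \<in> S" "js \<notin> T" using j12 by auto
  have jsn: "js < n" using js supp_lt[OF y(1)] unfolding S_def by auto
  have ysp: "j \<in> S \<Longrightarrow> y $ j > 0" for j using supp_pos[OF y(1)] unfolding S_def by auto
  have yd: "dim_vec y = n" using cand_dim[OF y(1)] .
  define K where "K = mat n n (\<lambda>(q,j). if q \<in> T then (if j \<in> T then A $$ (own q, j) - lam * B $$ (own q, j) else 0)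
                                       else (if q = j then 1 else 0))"
  have Kc: "K \<in> carrier_mat n n" unfolding K_def by simp
  have Kv: "(K *\<^sub>v v) $ q = (\<Sum>j<n. K $$ (q,j) * v $ j)" if "q < n" "v \<in> carrier_vec n" for q v
    by (rule mv_gen) (use that Kc in auto)
  have KnT: "(K *\<^sub>v v) $ q = v $ q" if q: "q < n" "q \<notin> T" and v: "v \<in> carrier_vec n" for q v
  proof -
    have "(K *\<^sub>v v) $ q = (\<Sum>j<n. (if j = q then v $ q else 0))"
      unfolding Kv[OF q(1) v] by (rule sum.cong) (auto simp: K_def q)
    also have "\<dots> = v $ q" using q by simp
    finally show ?thesis .
  qed
  have KT: "(K *\<^sub>v v) $ q = Ax (own q) v - lam * Bx (own q) v"
    if q: "q \<in> T" and v: "v \<in> carrier_vec n" "\<And>j. j < n \<Longrightarrow> j \<notin> T \<Longrightarrow> v $ j = 0" for q v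
  proof -
    have "(K *\<^sub>v v) $ q = (\<Sum>j<n. A $$ (own q, j) * v $ j - lam * (B $$ (own q, j) * v $ j))"
      unfolding Kv[OF Tn[OF q] v(1)] by (rule sum.cong) (auto simp: K_def q Tn v(2) algebra_simps)
    also have "\<dots> = Ax (own q) v - lam * Bx (own q) v"
      unfolding Ax_def Bx_def by (simp add: sum_subtractf sum_distrib_left)
    finally show ?thesis .
  qed
  have offT: "Ax r v = 0 \<and> Bx r v = 0"
    if r: "r < m" "r \<notin> P" and v: "\<And>j. j < n \<Longrightarrow> j \<notin> T \<Longrightarrow> v $ j = 0" for r v
  proof -
    have rP: "r \<notin> Pr y" using r unfolding P_def S_def Pr_def by simp
    have "Ax r v = 0" unfolding Ax_def
    proof (rule sum.neutral, intro ballI)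
      fix j assume "j \<in> {..<n}"
      then have j: "j < n" by simp
      show "A $$ (r,j) * v $ j = 0"
      proof (cases "j \<in> T")
        case True
        then have "j \<in> supp y" using TS unfolding S_def by auto
        then show ?thesis using offP(3)[OF y(1,2) r(1) rP] by simp
      qed (use v j in simp)
    qed
    moreover have "Bx r v = 0" unfolding Bx_def
    proof (rule sum.neutral, intro ballI)
      fix j assume "j \<in> {..<n}"
      then have j: "j < n" by simp
      show "B $$ (r,j) * v $ j = 0"
      proof (cases "j \<in> T")
        case True
        then have "own j \<noteq> r" using Tt r(2) by auto
        then show ?thesis using B_eq[OF j r(1)] by simp
      qed (use v j in simp)
    qed
    ultimately show ?thesis by simp
  qed
  show False
  proof (cases "det K = 0")
    case True
    then obtain v where v: "v \<in> carrier_vec n" "v \<noteq> 0\<^sub>v n" "K *\<^sub>v v = 0\<^sub>v n"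
      using det_0_iff_vec_prod_zero_field[OF Kc] by auto
    have vT: "v $ j = 0" if "j < n" "j \<notin> T" for j
    proof -
      have "v $ j = (K *\<^sub>v v) $ j" using KnT[OF that v(1)] by simp
      also have "\<dots> = 0" using v(3) that by simp
      finally show ?thesis .
    qed
    have vlin: "Ax i v = lam * Bx i v" if i: "i < m" for i
    proof (cases "i \<in> P")
      case True
      have "(K *\<^sub>v v) $ tau i = 0" using v(3) Tn[of "tau i"] True unfolding T_def by auto
      then show ?thesis using KT[of "tau i" v] True tau[OF True] v(1) vT unfolding T_def by auto
    next
      case False then show ?thesis using offT[OF i False vT] by simp
    qed
    obtain w where w: "w \<in> carrier_vec n" "\<And>j. j < n \<Longrightarrow> j \<notin> T \<Longrightarrow> w $ j = 0"
      "\<And>i. i < m \<Longrightarrow> Ax i w = lam * Bx i w" "\<exists>j<n. w $ j < 0"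
    proof (cases "\<exists>j<n. v $ j < 0")
      case True then show ?thesis using that[of v] v(1) vT vlin by blast
    next
      case False
      obtain j where j: "j < n" "v $ j \<noteq> 0" using v(1,2) by (metis eq_vecI carrier_vecD index_zero_vec)
      then have "v $ j > 0" using False by force
      let ?w = "(-1) \<cdot>\<^sub>v v"
      have "?w \<in> carrier_vec n" using v(1) by simp
      moreover have "\<And>j. j < n \<Longrightarrow> j \<notin> T \<Longrightarrow> ?w $ j = 0" using vT v(1) by auto
      moreover have "\<And>i. i < m \<Longrightarrow> Ax i ?w = lam * Bx i ?w"
        using vlin Ax_smult Bx_smult v(1) by auto
      moreover have "?w $ j < 0" using \<open>v $ j > 0\<close> j v(1) by auto
      ultimately show ?thesis using that j(1) by blast
    qed
    define Q where "Q = {j. j < n \<and> w $ j < 0}"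
    have fQ: "finite Q" "Q \<noteq> {}" unfolding Q_def using w(4) by auto
    define t where "t = Min ((\<lambda>j. y $ j / (- w $ j)) ` Q)"
    have "t \<in> (\<lambda>j. y $ j / (- w $ j)) ` Q" unfolding t_def by (rule Min_in) (use fQ in auto)
    then obtain j0 where j0: "j0 \<in> Q" "t = y $ j0 / (- w $ j0)" by blast
    have tle: "\<And>j. j \<in> Q \<Longrightarrow> t \<le> y $ j / (- w $ j)" unfolding t_def using fQ by auto
    have t0: "t \<ge> 0" using j0 cand_nn[OF y(1)] unfolding Q_def by (auto simp: divide_nonneg_neg)
    define x where "x = vec n (\<lambda>j. y $ j + t * w $ j)"
    have ix: "\<And>j. j < n \<Longrightarrow> x $ j = y $ j + t * w $ j" unfolding x_def by simp
    have xcar: "x \<in> carrier_vec n" unfolding x_def by simp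
    have xnn: "nonneg_vec x" unfolding nonneg_vec_def
    proof (intro allI impI)
      fix j assume "j < dim_vec x"
      then have j: "j < n" using xcar by simp
      show "x $ j \<ge> 0"
      proof (cases "w $ j < 0")
        case True
        then have "t \<le> y $ j / (- w $ j)" using tle j unfolding Q_def by auto
        moreover have "0 \<le> - w $ j" using True by simp
        ultimately have "t * (- w $ j) \<le> (y $ j / (- w $ j)) * (- w $ j)"
          by (rule mult_right_mono)
        moreover have "(y $ j / (- w $ j)) * (- w $ j) = y $ j" using True
          by (simp add: less_imp_neq)
        ultimately have "t * (- w $ j) \<le> y $ j" by simp
        then show ?thesis using ix[OF j] by simp
      next
        case False
        then show ?thesis using ix[OF j] t0 cand_nn[OF y(1) j] by simp
      qed
    qed
    have j0n: "j0 < n" and wj0: "w $ j0 < 0" using j0 unfolding Q_def by auto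
    have "x $ j0 = 0" using ix[OF j0n] j0(2) wj0 by (simp add: field_simps)
    have jsT: "x $ js = y $ js" using ix[OF jsn] w(2)[OF jsn js(2)] by simp
    then have "x $ js \<noteq> 0" using ysp[OF js(1)] by simp
    then have "x \<noteq> 0\<^sub>v n" using jsn by auto
    then have xc: "x \<in> cand" unfolding cand_def using xcar xnn by simp
    have "feas lam x" unfolding feas_def x_def Ax_vec_lin Bx_vec_lin using ti w(3)
      by (simp add: algebra_simps)
    have "supp x \<subseteq> supp y"
    proof
      fix j assume "j \<in> supp x"
      then have j: "j < n" "x $ j \<noteq> 0" using supp_iff[OF xc] by auto
      show "j \<in> supp y"
      proof (rule ccontr)
        assume "j \<notin> supp y"
        then have "y $ j = 0" "j \<notin> T" using supp_iff[OF y(1)] j TS S_def by auto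
        then show False using j ix w(2) by simp
      qed
    qed
    moreover have "j0 \<in> supp y" "j0 \<notin> supp x"
      using \<open>x $ j0 = 0\<close> w(2)[OF j0n] wj0 TS supp_iff[OF xc] S_def by auto
    ultimately have "supp x \<noteq> supp y" by auto
    with y(3)[OF xc \<open>feas lam x\<close> \<open>supp x \<subseteq> supp y\<close>] show False by simp
  next
    case False
    from det_non_zero_imp_unit[OF Kc False, of "()"]
    obtain Ki where Ki: "Ki \<in> carrier_mat n n" "K * Ki = 1\<^sub>m n"
      unfolding Units_def ring_mat_def by auto
    define c where "c = vec n (\<lambda>q. if q \<in> T then -1 else (0::real))"
    define h where "h = Ki *\<^sub>v c"
    have hc: "h \<in> carrier_vec n" unfolding h_def c_def using Ki by simp
    have Kh: "K *\<^sub>v h = c" unfolding h_def c_def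
      using assoc_mult_mat_vec[OF Kc Ki(1), of c] Ki(2) by (simp add: c_def)
    have hT: "h $ j = 0" if "j < n" "j \<notin> T" for j
    proof -
      have "h $ j = (K *\<^sub>v h) $ j" using KnT[OF that hc] by simp
      also have "\<dots> = 0" using that unfolding Kh c_def by simp
      finally show ?thesis .
    qed
    have hlin: "Ax i h - lam * Bx i h = (if i \<in> P then -1 else 0)" if i: "i < m" for i
    proof (cases "i \<in> P")
      case True
      have "tau i \<in> T" using True unfolding T_def by auto
      then have "(K *\<^sub>v h) $ tau i = -1" using Kh Tn unfolding c_def by auto
      then show ?thesis using KT[OF \<open>tau i \<in> T\<close> hc hT] tau[OF True] True by simp
    next
      case False then show ?thesis using offT[OF i False hT] by simp
    qed
    define mu where "mu = Min (((\<lambda>j. y $ j)) ` S)"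
    have fS: "finite S" "S \<noteq> {}" unfolding S_def using supp_fin supp_ne[OF y(1)] by auto
    have mu0: "mu > 0" unfolding mu_def using fS ysp by (subst Min_gr_iff) auto
    have muy: "\<And>j. j \<in> S \<Longrightarrow> mu \<le> y $ j" unfolding mu_def using fS by auto
    define H where "H = (\<Sum>j<n. \<bar>h $ j\<bar>) + 1"
    have hH: "\<And>j. j < n \<Longrightarrow> \<bar>h $ j\<bar> < H"
    proof -
      fix j assume j: "j < n"
      have "\<bar>h $ j\<bar> \<le> (\<Sum>j<n. \<bar>h $ j\<bar>)" by (rule member_le_sum) (use j in auto)
      then show "\<bar>h $ j\<bar> < H" unfolding H_def by simp
    qed
    have H0: "H > 0" using hH[of 0] n0 by linarith
    define eps where "eps = mu / (2 * H)"
    have e0: "eps > 0" unfolding eps_def using mu0 H0 by simp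
    have small: "eps * \<bar>h $ j\<bar> < mu" if j: "j < n" for j
    proof -
      have "eps * \<bar>h $ j\<bar> \<le> eps * H" using hH[OF j] e0 by (simp add: less_imp_le)
      also have "\<dots> = mu / 2" unfolding eps_def using H0 by simp
      finally show ?thesis using mu0 by simp
    qed
    define x where "x = vec n (\<lambda>j. y $ j + eps * h $ j)"
    have ix: "\<And>j. j < n \<Longrightarrow> x $ j = y $ j + eps * h $ j" unfolding x_def by simp
    have xcar: "x \<in> carrier_vec n" unfolding x_def by simp
    have xpos: "x $ j > 0" if "j \<in> S" for j
    proof -
      have j: "j < n" using that supp_lt[OF y(1)] S_def by auto
      have "- (eps * h $ j) \<le> eps * \<bar>h $ j\<bar>" using e0 by (simp add: abs_if)
      then show ?thesis using ix[OF j] small[OF j] muy[OF that] by linarith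
    qed
    have xz: "x $ j = 0" if "j < n" "j \<notin> S" for j
    proof -
      have "y $ j = 0" using that supp_iff[OF y(1)] S_def by auto
      moreover have "h $ j = 0" using hT that TS by auto
      ultimately show ?thesis using ix that by simp
    qed
    have xnn: "nonneg_vec x" unfolding nonneg_vec_def
    proof (intro allI impI)
      fix j assume "j < dim_vec x"
      then have j: "j < n" using xcar by simp
      show "x $ j \<ge> 0" using xpos[of j] xz[OF j] by (cases "j \<in> S") auto
    qed
    have "x \<noteq> 0\<^sub>v n" using xpos[OF js(1)] jsn by auto
    then have xc: "x \<in> cand" unfolding cand_def using xcar xnn by simp
    have sx: "supp x = S"
    proof
      show "supp x \<subseteq> S" using xz supp_iff[OF xc] by auto
      show "S \<subseteq> supp x" using xpos supp_iff[OF xc] supp_lt[OF y(1)] S_def by force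
    qed
    have Axl: "Ax i x - lam * Bx i x = eps * (if i \<in> P then -1 else 0)" if i: "i < m" for i
    proof -
      have "Ax i x - lam * Bx i x = (Ax i y - lam * Bx i y) + eps * (Ax i h - lam * Bx i h)"
        unfolding x_def Ax_vec_lin Bx_vec_lin by (simp add: algebra_simps)
      then show ?thesis using ti[OF i] hlin[OF i] by simp
    qed
    show False
    proof (rule low[OF xc])
      fix i assume i: "i < m" "Bx i x > 0"
      then have "i \<in> P" using Bx_pos_iff[OF xc i(1)] sx P_def by simp
      then show "Ax i x < lam * Bx i x" using Axl[OF i(1)] e0 by simp
    next
      fix i assume i: "i < m" "Bx i x = 0"
      then have "i \<notin> P" using Bx_pos_iff[OF xc i(1)] sx P_def by simp
      then show "Ax i x = 0" using Axl[OF i(1)] i(2) by simp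
    qed
  qed
qed

end

lemma pick_bij: assumes "finite S" shows "bij_betw (pick S) {..<card S} S"
proof -
  have inj: "inj_on (pick S) {..<card S}"
  proof (rule inj_onI)
    fix a b assume a: "a \<in> {..<card S}" and b: "b \<in> {..<card S}" and e: "pick S a = pick S b"
    show "a = b"
    proof (rule ccontr)
      assume "a \<noteq> b"
      then have "a < b \<or> b < a" by auto
      then show False using pick_mono_le[of b S a] pick_mono_le[of a S b] a b e by auto
    qed
  qed
  have "pick S ` {..<card S} = S"
  proof
    show "pick S ` {..<card S} \<subseteq> S" using pick_in_set_le by auto
    show "S \<subseteq> pick S ` {..<card S}"
    proof
      fix j assume j: "j \<in> S"
      have "{a\<in>S. a < j} \<subset> S" using j by auto
      then have "card {a\<in>S. a < j} < card S" by (rule psubset_card_mono[OF assms])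
      then show "j \<in> pick S ` {..<card S}" using pick_card_in_set[OF j] by (intro image_eqI[of _ _ "card {a\<in>S. a < j}"]) auto
    qed
  qed
  with inj show ?thesis unfolding bij_betw_def by simp
qed

locale sq = wn +
  fixes S :: "nat set"
  assumes S_sub: "S \<subseteq> {..<n}" and S_ne: "S \<noteq> {}" and S_inj: "inj_on own S"
begin

definition R where "R = {0..<dim_row B} - zero_rows B S"
definition l where "l = card S"
definition ps where "ps b = pick S b"
definition pr where "pr a = pick R a"
definition ra where "ra b = card {x \<in> R. x < own (ps b)}"
definition B' where "B' = submatrix B R S"
definition A' where "A' = submatrix A R S"
definition X where "X = the (mat_inverse B')"
definition C where "C = X * A'"

lemma fS: "finite S" using S_sub finite_subset by blast
lemma l0: "l > 0" unfolding l_def using fS S_ne by (simp add: card_gt_0_iff)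

lemma R_eq: "R = own ` S"
proof
  show "R \<subseteq> own ` S"
  proof
    fix i assume "i \<in> R"
    then have i: "i < m" "\<exists>j\<in>S. B $$ (i,j) \<noteq> 0" unfolding R_def zero_rows_def using B_carr by auto
    then obtain j where j: "j \<in> S" "B $$ (i,j) \<noteq> 0" by auto
    have "j < n" using j S_sub by auto
    then have "i = own j" using B_eq[OF _ i(1)] j by (auto split: if_splits)
    then show "i \<in> own ` S" using j by auto
  qed
  show "own ` S \<subseteq> R"
  proof
    fix i assume "i \<in> own ` S"
    then obtain j where j: "j \<in> S" "i = own j" by auto
    have jn: "j < n" using j S_sub by auto
    have "B $$ (i,j) \<noteq> 0" using own[OF jn] j bb_def by simp
    then show "i \<in> R" unfolding R_def zero_rows_def using B_carr own[OF jn] j by auto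
  qed
qed

lemma fR: "finite R" unfolding R_eq using fS by simp
lemma cardR: "card R = l" unfolding R_eq l_def using card_image[OF S_inj] .
lemma R_lt: "i \<in> R \<Longrightarrow> i < m" unfolding R_def using B_carr by auto

lemma dimsets: "{i. i < dim_row B \<and> i \<in> R} = R" "{i. i < dim_row A \<and> i \<in> R} = R"
  "{j. j < dim_col B \<and> j \<in> S} = S" "{j. j < dim_col A \<and> j \<in> S} = S"
  using R_lt S_sub A_carr B_carr by auto

lemma B'c: "B' \<in> carrier_mat l l"
  unfolding B'_def by (rule carrier_matI) (simp_all add: dim_submatrix dimsets cardR l_def)
lemma A'c: "A' \<in> carrier_mat l l"
  unfolding A'_def by (rule carrier_matI) (simp_all add: dim_submatrix dimsets cardR l_def)

lemma ps_bij: "bij_betw ps {..<l} S" unfolding ps_def l_def using pick_bij[OF fS] by simp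
lemma pr_bij: "bij_betw pr {..<l} R" unfolding pr_def cardR[symmetric] using pick_bij[OF fR] by simp

lemma ps: "b < l \<Longrightarrow> ps b \<in> S" using ps_bij unfolding bij_betw_def by auto
lemma ps_n: "b < l \<Longrightarrow> ps b < n" using ps S_sub by auto
lemma ps_inj: "b < l \<Longrightarrow> b' < l \<Longrightarrow> ps b = ps b' \<Longrightarrow> b = b'"
  using ps_bij unfolding bij_betw_def inj_on_def by auto
lemma ps_surj: assumes "j \<in> S" shows "\<exists>b<l. ps b = j"
proof -
  have "j \<in> ps ` {..<l}" using ps_bij assms unfolding bij_betw_def by simp
  then show ?thesis by auto
qed
lemma pr: "a < l \<Longrightarrow> pr a \<in> R" using pr_bij unfolding bij_betw_def by auto
lemma pr_inj: "a < l \<Longrightarrow> a' < l \<Longrightarrow> pr a = pr a' \<Longrightarrow> a = a'"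
  using pr_bij unfolding bij_betw_def inj_on_def by auto
lemma pr_surj: assumes "i \<in> R" shows "\<exists>a<l. pr a = i"
proof -
  have "i \<in> pr ` {..<l}" using pr_bij assms unfolding bij_betw_def by simp
  then show ?thesis by auto
qed

lemma ra: assumes "b < l" shows "ra b < l" "pr (ra b) = own (ps b)"
proof -
  have o: "own (ps b) \<in> R" unfolding R_eq using ps[OF assms] by simp
  have "{x \<in> R. x < own (ps b)} \<subset> R" using o by auto
  then show "ra b < l" unfolding ra_def cardR[symmetric] by (rule psubset_card_mono[OF fR])
  show "pr (ra b) = own (ps b)" unfolding pr_def ra_def using pick_card_in_set[OF o] .
qed

lemma ra_inj: assumes "b < l" "b' < l" "ra b = ra b'" shows "b = b'"
proof -
  have "own (ps b) = own (ps b')" using ra(2)[OF assms(1)] ra(2)[OF assms(2)] assms(3) by simp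
  then have "ps b = ps b'" using inj_onD[OF S_inj _ ps[OF assms(1)] ps[OF assms(2)]] by simp
  then show ?thesis using ps_inj assms(1,2) by simp
qed

lemma ra_surj: assumes "a < l" shows "\<exists>b<l. ra b = a"
proof -
  have "pr a \<in> own ` S" using pr[OF assms] R_eq by simp
  then obtain j where j: "j \<in> S" "own j = pr a" by auto
  obtain b where b: "b < l" "ps b = j" using ps_surj[OF j(1)] by auto
  have "pr (ra b) = pr a" using ra(2)[OF b(1)] b(2) j(2) by simp
  then have "ra b = a" using pr_inj[OF ra(1)[OF b(1)] assms] by simp
  then show ?thesis using b(1) by auto
qed

lemma B'ent: assumes "a < l" "b < l"
  shows "B' $$ (a,b) = (if a = ra b then bb (ps b) else 0)"
proof -
  have a: "a < card {i. i < dim_row B \<and> i \<in> R}" using assms(1) unfolding dimsets cardR .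
  have b: "b < card {j. j < dim_col B \<and> j \<in> S}" using assms(2) unfolding dimsets l_def .
  have "B' $$ (a,b) = B $$ (pr a, ps b)" unfolding B'_def pr_def ps_def by (rule submatrix_index[OF a b])
  also have "\<dots> = (if pr a = own (ps b) then bb (ps b) else 0)"
    by (rule B_eq[OF ps_n[OF assms(2)] R_lt[OF pr[OF assms(1)]]])
  also have "(pr a = own (ps b)) = (a = ra b)"
    using ra[OF assms(2)] pr_inj[OF assms(1) ra(1)[OF assms(2)]] by auto
  finally show ?thesis .
qed

lemma A'ent: assumes "a < l" "c < l" shows "A' $$ (a,c) = A $$ (pr a, ps c)"
proof -
  have a: "a < card {i. i < dim_row A \<and> i \<in> R}" using assms(1) unfolding dimsets cardR .
  have c: "c < card {j. j < dim_col A \<and> j \<in> S}" using assms(2) unfolding dimsets l_def .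
  show ?thesis unfolding A'_def pr_def ps_def by (rule submatrix_index[OF a c])
qed

lemma B'mv: assumes b: "b < l" and v: "v \<in> carrier_vec l"
  shows "(B' *\<^sub>v v) $ (ra b) = bb (ps b) * v $ b"
proof -
  have "(B' *\<^sub>v v) $ (ra b) = (\<Sum>b'<l. B' $$ (ra b, b') * v $ b')"
    using B'c v ra(1)[OF b] by (simp add: index_mult_mat_vec scalar_prod_def atLeast0LessThan)
  also have "\<dots> = (\<Sum>b'<l. (if b' = b then bb (ps b) * v $ b else 0))"
  proof (rule sum.cong)
    fix b' assume "b' \<in> {..<l}"
    then have b': "b' < l" by simp
    have "(ra b = ra b') = (b' = b)" using ra_inj[OF b b'] by auto
    then show "B' $$ (ra b, b') * v $ b' = (if b' = b then bb (ps b) * v $ b else 0)"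
      using B'ent[OF ra(1)[OF b] b'] by auto
  qed simp
  also have "\<dots> = bb (ps b) * v $ b" using b by simp
  finally show ?thesis .
qed

lemma detB': "det B' \<noteq> 0"
proof
  assume "det B' = 0"
  then obtain v where v: "v \<in> carrier_vec l" "v \<noteq> 0\<^sub>v l" "B' *\<^sub>v v = 0\<^sub>v l"
    using det_0_iff_vec_prod_zero_field[OF B'c] by auto
  have "v = 0\<^sub>v l"
  proof (rule eq_vecI)
    show "dim_vec v = dim_vec (0\<^sub>v l)" using v by simp
    fix b assume "b < dim_vec (0\<^sub>v l)"
    then have b: "b < l" by simp
    have "bb (ps b) * v $ b = 0" using B'mv[OF b v(1)] v(3) ra(1)[OF b] by simp
    then show "v $ b = 0\<^sub>v l $ b" using own(2)[OF ps_n[OF b]] b by simp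
  qed
  with v(2) show False by simp
qed

lemma X: "mat_inverse B' = Some X" "X \<in> carrier_mat l l" "B' * X = 1\<^sub>m l" "X * B' = 1\<^sub>m l"
proof -
  have u: "B' \<in> Units (ring_mat TYPE(real) l ())" by (rule det_non_zero_imp_unit[OF B'c detB'])
  have "mat_inverse B' \<noteq> None"
  proof
    assume "mat_inverse B' = None"
    from mat_inverse(1)[OF B'c this, of "()"] u show False by simp
  qed
  then show mi: "mat_inverse B' = Some X" unfolding X_def by auto
  from mat_inverse(2)[OF B'c mi] show "X \<in> carrier_mat l l" "B' * X = 1\<^sub>m l" "X * B' = 1\<^sub>m l" by auto
qed

lemma Cc: "C \<in> carrier_mat l l" unfolding C_def using X(2) A'c by simp

lemma BC: "B' * C = A'"
proof -
  have "B' * C = (B' * X) * A'" unfolding C_def using assoc_mult_mat[OF B'c X(2) A'c] by simp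
  then show ?thesis using X(3) A'c by simp
qed

lemma C_eq: "supp w = S \<Longrightarrow> C_mat A B w = C"
  unfolding C_mat_def C_def X_def B'_def A'_def R_def Let_def by simp

lemma Cent: assumes b: "b < l" and c: "c < l"
  shows "C $$ (b,c) = A $$ (own (ps b), ps c) / bb (ps b)"
proof -
  have "A' $$ (ra b, c) = (B' * C) $$ (ra b, c)" using BC by simp
  also have "\<dots> = (B' *\<^sub>v col C c) $ (ra b)"
    using B'c Cc ra(1)[OF b] c by (simp add: index_mult_mat index_mult_mat_vec)
  also have "\<dots> = bb (ps b) * C $$ (b,c)"
    using B'mv[OF b, of "col C c"] Cc b c by simp
  finally have "A' $$ (ra b, c) = bb (ps b) * C $$ (b,c)" .
  moreover have "A' $$ (ra b, c) = A $$ (own (ps b), ps c)"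
    using A'ent[OF ra(1)[OF b] c] ra(2)[OF b] by simp
  ultimately show ?thesis using own(2)[OF ps_n[OF b]] by (simp add: field_simps)
qed

lemma C_nn: "b < l \<Longrightarrow> c < l \<Longrightarrow> C $$ (b,c) \<ge> 0"
  using Cent A_nn own ps_n by (simp add: less_imp_le)
lemma C_pos: assumes "b < l" "c < l" shows "C $$ (b,c) > 0 \<longleftrightarrow> A $$ (own (ps b), ps c) > 0"
proof -
  have "bb (ps b) > 0" using own(2)[OF ps_n[OF assms(1)]] .
  then show ?thesis unfolding Cent[OF assms] by (simp add: zero_less_divide_iff)
qed

lemma restr: assumes "supp w = S" shows "restrict_supp w = vec l (\<lambda>b. w $ ps b)"
  unfolding restrict_supp_def assms l_def ps_def by simp

lemma SV: assumes w: "supp w = S" "dim_vec w = n" and a: "a < l" and M: "M \<in> carrier_mat m n"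
  shows "(submatrix M R S *\<^sub>v restrict_supp w) $ a = (\<Sum>j<n. M $$ (pr a, j) * w $ j)"
proof -
  have ds: "{i. i < dim_row M \<and> i \<in> R} = R" "{j. j < dim_col M \<and> j \<in> S} = S"
    using R_lt S_sub M by auto
  have Mc: "submatrix M R S \<in> carrier_mat l l"
    by (rule carrier_matI) (simp_all add: dim_submatrix ds cardR l_def)
  have "(submatrix M R S *\<^sub>v restrict_supp w) $ a = (\<Sum>b<l. submatrix M R S $$ (a,b) * w $ ps b)"
    using Mc a unfolding restr[OF w(1)]
    by (simp add: index_mult_mat_vec scalar_prod_def atLeast0LessThan)
  also have "\<dots> = (\<Sum>b<l. M $$ (pr a, ps b) * w $ ps b)"
  proof (rule sum.cong)
    fix b assume "b \<in> {..<l}"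
    then have b: "b < card {j. j < dim_col M \<and> j \<in> S}" unfolding ds l_def by simp
    have a': "a < card {i. i < dim_row M \<and> i \<in> R}" unfolding ds cardR using a .
    show "submatrix M R S $$ (a,b) * w $ ps b = M $$ (pr a, ps b) * w $ ps b"
      unfolding pr_def ps_def submatrix_index[OF a' b] ..
  qed simp
  also have "\<dots> = (\<Sum>j\<in>S. M $$ (pr a, j) * w $ j)"
    by (rule sum.reindex_bij_betw[OF ps_bij, of "\<lambda>j. M $$ (pr a, j) * w $ j"])
  also have "\<dots> = (\<Sum>j<n. M $$ (pr a, j) * w $ j)"
  proof (rule sum.mono_neutral_left)
    show "\<forall>j\<in>{..<n} - S. M $$ (pr a, j) * w $ j = 0"
      using w unfolding supp_def by auto
  qed (use S_sub in auto)
  finally show ?thesis .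
qed

lemma SVA: "supp w = S \<Longrightarrow> dim_vec w = n \<Longrightarrow> a < l \<Longrightarrow> (A' *\<^sub>v restrict_supp w) $ a = Ax (pr a) w"
  unfolding A'_def Ax_def using SV[OF _ _ _ A_carr] by simp
lemma SVB: "supp w = S \<Longrightarrow> dim_vec w = n \<Longrightarrow> a < l \<Longrightarrow> (B' *\<^sub>v restrict_supp w) $ a = Bx (pr a) w"
  unfolding B'_def Bx_def using SV[OF _ _ _ B_carr] by simp

end


lemma cw_bound:
  fixes Cm :: "real mat" and z :: "real vec" and mu :: complex
  assumes Cc: "Cm \<in> carrier_mat k k" and Cn: "\<And>i j. i < k \<Longrightarrow> j < k \<Longrightarrow> Cm $$ (i,j) \<ge> 0"
    and z: "z \<in> carrier_vec k" "\<And>i. i < k \<Longrightarrow> z $ i > 0" and Cz: "Cm *\<^sub>v z = r \<cdot>\<^sub>v z"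
    and ev: "eigenvalue (map_mat complex_of_real Cm) mu"
  shows "cmod mu \<le> r"
proof -
  obtain v where v: "v \<in> carrier_vec k" "v \<noteq> 0\<^sub>v k" "map_mat complex_of_real Cm *\<^sub>v v = mu \<cdot>\<^sub>v v"
    using ev Cc unfolding eigenvalue_def eigenvector_def by auto
  obtain j1 where j1: "j1 < k" "v $ j1 \<noteq> 0" using v(1,2) by (metis eq_vecI carrier_vecD index_zero_vec)
  define q where "q i = cmod (v $ i) / z $ i" for i
  define t where "t = Max (q ` {..<k})"
  have fin: "finite (q ` {..<k})" "q ` {..<k} \<noteq> {}" using j1 by auto
  have "t \<in> q ` {..<k}" unfolding t_def by (rule Max_in[OF fin])
  then obtain i0 where i0: "i0 < k" "t = q i0" by auto
  have qle: "q i \<le> t" if "i < k" for i unfolding t_def using fin that by auto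
  have vle: "cmod (v $ i) \<le> t * z $ i" if i: "i < k" for i
    using qle[OF i] z(2)[OF i] unfolding q_def by (simp add: pos_divide_le_eq)
  have "q j1 > 0" unfolding q_def using z(2)[OF j1(1)] j1(2) by simp
  then have t0: "t > 0" using qle[OF j1(1)] by simp
  have vi0: "cmod (v $ i0) = t * z $ i0" unfolding i0(2) q_def using z(2)[OF i0(1)] by simp
  have "mu * v $ i0 = (map_mat complex_of_real Cm *\<^sub>v v) $ i0" using v(3) v(1) i0(1) by simp
  also have "\<dots> = (\<Sum>j<k. complex_of_real (Cm $$ (i0,j)) * v $ j)"
    using Cc v(1) i0(1) by (simp add: index_mult_mat_vec scalar_prod_def atLeast0LessThan)
  finally have e1: "mu * v $ i0 = (\<Sum>j<k. complex_of_real (Cm $$ (i0,j)) * v $ j)" .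
  have "cmod mu * cmod (v $ i0) = cmod (\<Sum>j<k. complex_of_real (Cm $$ (i0,j)) * v $ j)"
    using e1 by (metis norm_mult)
  also have "\<dots> \<le> (\<Sum>j<k. cmod (complex_of_real (Cm $$ (i0,j)) * v $ j))" by (rule norm_sum)
  also have "\<dots> = (\<Sum>j<k. Cm $$ (i0,j) * cmod (v $ j))"
    by (rule sum.cong) (use Cn i0(1) in \<open>auto simp: norm_mult\<close>)
  also have "\<dots> \<le> (\<Sum>j<k. Cm $$ (i0,j) * (t * z $ j))"
    by (rule sum_mono) (use Cn i0(1) vle in \<open>auto intro: mult_left_mono\<close>)
  also have "\<dots> = t * (\<Sum>j<k. Cm $$ (i0,j) * z $ j)" by (simp add: sum_distrib_left algebra_simps)
  also have "(\<Sum>j<k. Cm $$ (i0,j) * z $ j) = (Cm *\<^sub>v z) $ i0"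
    using Cc z(1) i0(1) by (simp add: index_mult_mat_vec scalar_prod_def atLeast0LessThan)
  also have "\<dots> = r * z $ i0" using Cz z(1) i0(1) by simp
  finally have "cmod mu * (t * z $ i0) \<le> t * (r * z $ i0)" unfolding vi0 .
  then have "cmod mu * (t * z $ i0) \<le> r * (t * z $ i0)" by (simp add: algebra_simps)
  moreover have "t * z $ i0 > 0" using t0 z(2)[OF i0(1)] by simp
  ultimately show ?thesis by (rule mult_right_le_imp_le)
qed

lemma spec_rad_eq:
  fixes Cm :: "real mat" and z :: "real vec"
  assumes Cc: "Cm \<in> carrier_mat k k" and Cn: "\<And>i j. i < k \<Longrightarrow> j < k \<Longrightarrow> Cm $$ (i,j) \<ge> 0"
    and k: "k > 0"
    and z: "z \<in> carrier_vec k" "\<And>i. i < k \<Longrightarrow> z $ i > 0" and Cz: "Cm *\<^sub>v z = r \<cdot>\<^sub>v z"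
    and r: "r \<ge> 0"
  shows "spec_rad Cm = r"
proof -
  let ?M = "map_mat complex_of_real Cm"
  have Mc: "?M \<in> carrier_mat k k" using Cc by simp
  have "eigenvector ?M (map_vec complex_of_real z) (complex_of_real r)"
    unfolding eigenvector_def
  proof (intro conjI)
    show "map_vec complex_of_real z \<in> carrier_vec (dim_row ?M)" using z Cc by simp
    have z0: "z $ 0 \<noteq> 0" using z(2)[OF k] by simp
    have "(map_vec complex_of_real z) $ 0 \<noteq> 0" using z0 z k by simp
    then show "map_vec complex_of_real z \<noteq> 0\<^sub>v (dim_row ?M)" using k Cc z by auto
    show "?M *\<^sub>v map_vec complex_of_real z = complex_of_real r \<cdot>\<^sub>v map_vec complex_of_real z"
    proof (rule eq_vecI)
      fix i assume "i < dim_vec (complex_of_real r \<cdot>\<^sub>v map_vec complex_of_real z)"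
      then have i: "i < k" using z by simp
      have "(?M *\<^sub>v map_vec complex_of_real z) $ i = (\<Sum>j<k. complex_of_real (Cm $$ (i,j)) * complex_of_real (z $ j))"
        using Cc z i by (simp add: index_mult_mat_vec scalar_prod_def atLeast0LessThan)
      also have "\<dots> = complex_of_real (\<Sum>j<k. Cm $$ (i,j) * z $ j)" by simp
      also have "(\<Sum>j<k. Cm $$ (i,j) * z $ j) = (Cm *\<^sub>v z) $ i"
        using Cc z i by (simp add: index_mult_mat_vec scalar_prod_def atLeast0LessThan)
      also have "\<dots> = r * z $ i" using Cz z i by simp
      finally show "(?M *\<^sub>v map_vec complex_of_real z) $ i = (complex_of_real r \<cdot>\<^sub>v map_vec complex_of_real z) $ i"
        using z i by simp
    qed (use Cc z in simp)
  qed
  then have "complex_of_real r \<in> spectrum ?M" unfolding spectrum_def eigenvalue_def by auto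
  then have "cmod (complex_of_real r) \<in> norm ` spectrum ?M" by (rule imageI)
  then have "cmod (complex_of_real r) \<le> spectral_radius ?M"
    by (rule spectral_radius_mem_max(2)[OF Mc k])
  then have le1: "r \<le> spec_rad Cm" unfolding spec_rad_def using r by simp
  have "spectral_radius ?M \<in> norm ` spectrum ?M" by (rule spectral_radius_mem_max(1)[OF Mc k])
  then obtain mu where mu: "mu \<in> spectrum ?M" "spectral_radius ?M = cmod mu" by auto
  have "cmod mu \<le> r" by (rule cw_bound[OF Cc Cn z Cz]) (use mu in \<open>auto simp: spectrum_def\<close>)
  with le1 mu show ?thesis unfolding spec_rad_def by simp
qed

context wn begin

lemma R_eq_gen: assumes "S \<subseteq> {..<n}" shows "{0..<dim_row B} - zero_rows B S = own ` S"
proof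
  show "{0..<dim_row B} - zero_rows B S \<subseteq> own ` S"
  proof
    fix i assume "i \<in> {0..<dim_row B} - zero_rows B S"
    then have i: "i < m" "\<exists>j\<in>S. B $$ (i,j) \<noteq> 0" unfolding zero_rows_def using B_carr by auto
    then obtain j where j: "j \<in> S" "B $$ (i,j) \<noteq> 0" by auto
    have "j < n" using j assms by auto
    then have "i = own j" using B_eq[OF _ i(1)] j by (auto split: if_splits)
    then show "i \<in> own ` S" using j by auto
  qed
  show "own ` S \<subseteq> {0..<dim_row B} - zero_rows B S"
  proof
    fix i assume "i \<in> own ` S"
    then obtain j where j: "j \<in> S" "i = own j" by auto
    have jn: "j < n" using j assms by auto
    have "B $$ (i,j) \<noteq> 0" using own[OF jn] j bb_def by simp
    then show "i \<in> {0..<dim_row B} - zero_rows B S" unfolding zero_rows_def using B_carr own[OF jn] j by auto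
  qed
qed

lemma zero_rows_eq: assumes "S \<subseteq> {..<n}" shows "zero_rows B S = {0..<m} - own ` S"
proof -
  have "zero_rows B S \<subseteq> {0..<m}" unfolding zero_rows_def using B_carr by auto
  then show ?thesis using R_eq_gen[OF assms] B_carr by auto
qed

lemma minWO_in_E: assumes mw: "min_weakly_optimal A B y" and yp: "y \<in> prob_vecs n"
  shows "y \<in> E_set A B"
proof -
  note y = minWO_D[OF mw]
  define S where "S = supp y"
  have Ssub: "S \<subseteq> {..<n}" unfolding S_def using supp_lt[OF y(1)] by auto
  interpret sq A B m n S
    by unfold_locales (use Ssub supp_ne[OF y(1)] inj_own[OF mw] in \<open>auto simp: S_def\<close>)
  have yd: "dim_vec y = n" using cand_dim[OF y(1)] .
  have Sm: "card S \<le> m"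
  proof -
    have "card S = card R" using cardR l_def by simp
    also have "\<dots> \<le> card {..<m}" using R_lt by (intro card_mono) auto
    finally show ?thesis by simp
  qed
  have zr: "zero_rows B S = {0..<m} - R" using zero_rows_eq[OF Ssub] R_eq by simp
  have czr: "card (zero_rows B S) = m - card S"
  proof -
    have "R \<subseteq> {0..<m}" using R_lt by auto
    then have "card ({0..<m} - R) = m - card R" by (simp add: card_Diff_subset fR)
    then show ?thesis using zr cardR l_def by simp
  qed
  have Az: "\<forall>i\<in>zero_rows B S. \<forall>j\<in>S. A $$ (i,j) = 0"
  proof (intro ballI)
    fix i j assume i: "i \<in> zero_rows B S" and j: "j \<in> S"
    have "i < m" "i \<notin> Pr y" using i zr R_eq unfolding Pr_def S_def by auto
    then show "A $$ (i,j) = 0" using offP(3)[OF y(1,2)] j S_def by blast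
  qed
  have CE: "C_mat A B y = C" using C_eq S_def by simp
  have irr: "irreducible_mat C"
  proof -
    have G: "\<forall>b<l. own (ps b) = u \<longrightarrow> (\<forall>c<l. own (ps c) = v \<longrightarrow>
               (b,c) \<in> {(a,b). a < dim_row C \<and> b < dim_row C \<and> C $$ (a,b) > 0}\<^sup>*)"
      if uv: "(u,v) \<in> (Ed y)\<^sup>*" for u v
      using uv
    proof (induction rule: rtrancl_induct)
      case base
      show ?case
      proof (intro allI impI)
        fix b c assume "b < l" "own (ps b) = u" "c < l" "own (ps c) = u"
        then have "ps b = ps c" using inj_onD[OF S_inj _ ps ps] by simp
        then have "b = c" using ps_inj \<open>b < l\<close> \<open>c < l\<close> by simp
        then show "(b,c) \<in> {(a,b). a < dim_row C \<and> b < dim_row C \<and> C $$ (a,b) > 0}\<^sup>*" by simp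
      qed
    next
      case (step v' v)
      show ?case
      proof (intro allI impI)
        fix b c assume b: "b < l" "own (ps b) = u" and c: "c < l" "own (ps c) = v"
        from step(2) have "v' \<in> Pr y" and ex: "\<exists>j\<in>supp y. own j = v \<and> A $$ (v', j) > 0"
          unfolding Ed_def by auto
        then obtain j' where j': "j' \<in> S" "own j' = v'" unfolding Pr_def S_def by auto
        obtain c' where c': "c' < l" "ps c' = j'" using ps_surj[OF j'(1)] by auto
        have IH: "(b,c') \<in> {(a,b). a < dim_row C \<and> b < dim_row C \<and> C $$ (a,b) > 0}\<^sup>*"
          using step(3) b c' j' by auto
        from ex obtain j where j: "j \<in> S" "own j = v" "A $$ (v', j) > 0" unfolding S_def by auto
        obtain c0 where c0: "c0 < l" "ps c0 = j" using ps_surj[OF j(1)] by auto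
        have "ps c0 = ps c" using inj_onD[OF S_inj _ ps[OF c0(1)] ps[OF c(1)]] c0 j c by simp
        then have "c0 = c" using ps_inj c0(1) c(1) by simp
        then have "C $$ (c', c) > 0" using C_pos[OF c'(1) c(1)] j c0 c' j' by simp
        then have "(c', c) \<in> {(a,b). a < dim_row C \<and> b < dim_row C \<and> C $$ (a,b) > 0}"
          using Cc c'(1) c(1) by simp
        with IH show "(b,c) \<in> {(a,b). a < dim_row C \<and> b < dim_row C \<and> C $$ (a,b) > 0}\<^sup>*"
          by (rule rtrancl_into_rtrancl)
      qed
    qed
    show ?thesis unfolding irreducible_mat_def
    proof (intro allI impI)
      fix b c assume "b < dim_row C" "c < dim_row C"
      then have b: "b < l" and c: "c < l" using Cc by auto
      have "own (ps b) \<in> Pr y" "own (ps c) \<in> Pr y" using ps b c unfolding Pr_def S_def by auto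
      then have "(own (ps b), own (ps c)) \<in> (Ed y)\<^sup>*" using strong[OF mw] by blast
      from G[OF this] b c show "(b,c) \<in> {(a,b). a < dim_row C \<and> b < dim_row C \<and> C $$ (a,b) > 0}\<^sup>*"
        by simp
    qed
  qed
  define z where "z = restrict_supp y"
  have zv: "z = vec l (\<lambda>b. y $ ps b)" unfolding z_def using restr S_def by simp
  have zc: "z \<in> carrier_vec l" unfolding zv by simp
  have zpos: "\<And>b. b < l \<Longrightarrow> z $ b > 0" unfolding zv using ps supp_pos[OF y(1)] S_def by simp
  have Az_eq: "A' *\<^sub>v z = lam \<cdot>\<^sub>v (B' *\<^sub>v z)"
  proof (rule eq_vecI)
    fix a assume "a < dim_vec (lam \<cdot>\<^sub>v (B' *\<^sub>v z))"
    then have a: "a < l" using B'c by simp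
    show "(A' *\<^sub>v z) $ a = (lam \<cdot>\<^sub>v (B' *\<^sub>v z)) $ a"
      using SVA[OF _ yd a] SVB[OF _ yd a] tight[OF mw R_lt[OF pr[OF a]]] a B'c
      unfolding z_def S_def by simp
  qed (use A'c B'c in simp)
  have Cz: "C *\<^sub>v z = lam \<cdot>\<^sub>v z"
  proof -
    have "C *\<^sub>v z = X *\<^sub>v (A' *\<^sub>v z)" unfolding C_def using assoc_mult_mat_vec[OF X(2) A'c zc] .
    also have "\<dots> = X *\<^sub>v (lam \<cdot>\<^sub>v (B' *\<^sub>v z))" unfolding Az_eq ..
    also have "\<dots> = lam \<cdot>\<^sub>v (X *\<^sub>v (B' *\<^sub>v z))" using X(2) B'c zc by (simp add: mult_mat_vec)
    also have "X *\<^sub>v (B' *\<^sub>v z) = (X * B') *\<^sub>v z" using assoc_mult_mat_vec[OF X(2) B'c zc] by simp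
    also have "\<dots> = z" using X(4) zc by simp
    finally show ?thesis .
  qed
  have sr: "spec_rad C = lam" by (rule spec_rad_eq[OF Cc C_nn l0 zc zpos Cz lam_nn])
  have PF: "PF_eigenvector C z"
    unfolding PF_eigenvector_def
  proof (intro conjI)
    show "z \<in> carrier_vec (dim_row C)" using zc Cc by simp
    show "nonneg_vec z" unfolding nonneg_vec_def using zc zpos by (simp add: less_imp_le)
    show "z \<noteq> 0\<^sub>v (dim_row C)" using zpos[OF l0] Cc l0 by auto
    show "C *\<^sub>v z = spec_rad C \<cdot>\<^sub>v z" using Cz sr by simp
  qed
  have dA: "dim_col A = n" "dim_row A = m" using A_carr by auto
  have zpos': "\<forall>b<card (supp y). restrict_supp y $ b > 0" using zpos[unfolded l_def] unfolding z_def S_def by simp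
  show ?thesis unfolding E_set_def Let_def mem_Collect_eq
    using yp dA Sm czr Az irr zpos' PF CE unfolding S_def z_def by auto
qed

end

lemma pf_unique:
  fixes Cm :: "real mat"
  assumes Cc: "Cm \<in> carrier_mat k k" and Cn: "\<And>i j. i < k \<Longrightarrow> j < k \<Longrightarrow> Cm $$ (i,j) \<ge> 0"
    and irr: "irreducible_mat Cm"
    and z1: "z1 \<in> carrier_vec k" "\<And>i. i < k \<Longrightarrow> z1 $ i > 0" and C1: "Cm *\<^sub>v z1 = r \<cdot>\<^sub>v z1"
    and z2: "z2 \<in> carrier_vec k" "\<And>i. i < k \<Longrightarrow> z2 $ i > 0" and C2: "Cm *\<^sub>v z2 = r \<cdot>\<^sub>v z2"
  shows "\<exists>t. \<forall>i<k. z2 $ i = t * z1 $ i"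
proof (cases "k = 0")
  case True then show ?thesis by simp
next
  case False
  define q where "q i = z2 $ i / z1 $ i" for i
  define t where "t = Min (q ` {..<k})"
  have fin: "finite (q ` {..<k})" "q ` {..<k} \<noteq> {}" using False by auto
  have "t \<in> q ` {..<k}" unfolding t_def by (rule Min_in[OF fin])
  then obtain i0 where i0: "i0 < k" "t = q i0" by auto
  define u where "u i = z2 $ i - t * z1 $ i" for i
  have u0: "u i \<ge> 0" if "i < k" for i
  proof -
    have "t \<le> q i" unfolding t_def using fin that by auto
    then have "t * z1 $ i \<le> z2 $ i" unfolding q_def using z1(2)[OF that] by (simp add: pos_le_divide_eq)
    then show ?thesis unfolding u_def by simp
  qed
  have ui0: "u i0 = 0" unfolding u_def i0(2) q_def using z1(2)[OF i0(1)] by simp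
  have mv: "(Cm *\<^sub>v z) $ i = (\<Sum>j<k. Cm $$ (i,j) * z $ j)" if "i < k" "z \<in> carrier_vec k" for i z
    using Cc that by (simp add: index_mult_mat_vec scalar_prod_def atLeast0LessThan)
  have Cu: "(\<Sum>j<k. Cm $$ (i,j) * u j) = r * u i" if i: "i < k" for i
  proof -
    have "(\<Sum>j<k. Cm $$ (i,j) * u j) = (Cm *\<^sub>v z2) $ i - t * (Cm *\<^sub>v z1) $ i"
      unfolding mv[OF i z1(1)] mv[OF i z2(1)] u_def
      by (simp add: algebra_simps sum_subtractf sum_distrib_left)
    also have "\<dots> = r * u i" unfolding C1 C2 u_def using i z1(1) z2(1) by (simp add: algebra_simps)
    finally show ?thesis .
  qed
  have stp: "u j = 0" if i: "i < k" "u i = 0" and j: "j < k" "Cm $$ (i,j) > 0" for i j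
  proof -
    have "(\<Sum>j<k. Cm $$ (i,j) * u j) = 0" using Cu[OF i(1)] i(2) by simp
    then have "\<forall>j'\<in>{..<k}. Cm $$ (i,j') * u j' = 0"
      by (subst sum_nonneg_eq_0_iff[symmetric]) (use Cn u0 i in auto)
    then have "Cm $$ (i,j) * u j = 0" using j by blast
    then show ?thesis using j by simp
  qed
  have reach: "u j = 0" if "(i0, j) \<in> {(a,b). a < dim_row Cm \<and> b < dim_row Cm \<and> Cm $$ (a,b) > 0}\<^sup>*" for j
    using that
  proof (induction rule: rtrancl_induct)
    case base show ?case by (rule ui0)
  next
    case (step a b)
    then show ?case using Cc by (intro stp[of a b]) auto
  qed
  have "\<forall>i<k. z2 $ i = t * z1 $ i"
  proof (intro allI impI)
    fix i assume i: "i < k"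
    have "(i0, i) \<in> {(a,b). a < dim_row Cm \<and> b < dim_row Cm \<and> Cm $$ (a,b) > 0}\<^sup>*"
      using irr i i0(1) Cc unfolding irreducible_mat_def by auto
    then have "u i = 0" by (rule reach)
    then show "z2 $ i = t * z1 $ i" unfolding u_def by simp
  qed
  then show ?thesis by blast
qed

context wn begin

lemma E_D: assumes "w \<in> E_set A B"
  shows "w \<in> prob_vecs n" "card (supp w) \<le> m" "card (zero_rows B (supp w)) = m - card (supp w)"
    "\<forall>i\<in>zero_rows B (supp w). \<forall>j\<in>supp w. A $$ (i,j) = 0" "irreducible_mat (C_mat A B w)"
    "\<forall>i<card (supp w). restrict_supp w $ i > 0" "PF_eigenvector (C_mat A B w) (restrict_supp w)"
  using assms A_carr unfolding E_set_def Let_def by auto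

lemma prob_cand: assumes "w \<in> prob_vecs n" shows "w \<in> cand"
proof -
  have w: "w \<in> carrier_vec n" "nonneg_vec w" "(\<Sum>i<n. w $ i) = 1" using assms unfolding prob_vecs_def by auto
  have "w \<noteq> 0\<^sub>v n"
  proof
    assume "w = 0\<^sub>v n"
    then have "(\<Sum>i<n. w $ i) = 0" by simp
    with w(3) show False by simp
  qed
  with w show ?thesis unfolding cand_def by simp
qed

lemma E_cand: "w \<in> E_set A B \<Longrightarrow> w \<in> cand" using E_D(1) prob_cand by blast

lemma E_inj: assumes w: "w \<in> E_set A B" shows "inj_on own (supp w)"
proof -
  define S where "S = supp w"
  have wc: "w \<in> cand" using E_cand[OF w] .
  have Ssub: "S \<subseteq> {..<n}" unfolding S_def using supp_lt[OF wc] by auto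
  have fS: "finite S" unfolding S_def by (rule supp_fin)
  have osub: "own ` S \<subseteq> {0..<m}" using own Ssub by auto
  have "card (zero_rows B S) = m - card (own ` S)"
    unfolding zero_rows_eq[OF Ssub] using osub by (simp add: card_Diff_subset fS)
  moreover have "card (zero_rows B S) = m - card S" using E_D(3)[OF w] S_def by simp
  moreover have "card S \<le> m" using E_D(2)[OF w] S_def by simp
  moreover have "card (own ` S) \<le> card S" using fS by (rule card_image_le)
  ultimately have "card (own ` S) = card S" by linarith
  then show ?thesis using eq_card_imp_inj_on[OF fS] S_def by simp
qed

lemma E_sq: assumes w: "w \<in> E_set A B" shows "sq A B m n (supp w)"
proof -
  have wc: "w \<in> cand" using E_cand[OF w] .
  show ?thesis
    by unfold_locales (use supp_lt[OF wc] supp_ne[OF wc] E_inj[OF w] in auto)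
qed

lemma E_props: assumes w: "w \<in> E_set A B"
  shows "A *\<^sub>v w = spec_rad (C_mat A B w) \<cdot>\<^sub>v (B *\<^sub>v w)"
    "ereal (spec_rad (C_mat A B w)) = r_fun A B w"
proof -
  interpret sq A B m n "supp w" by (rule E_sq[OF w])
  have wc: "w \<in> cand" using E_cand[OF w] .
  have wd: "dim_vec w = n" using cand_dim[OF wc] .
  define rho where "rho = spec_rad C"
  have CE: "C_mat A B w = C" using C_eq by simp
  define z where "z = restrict_supp w"
  have zc: "z \<in> carrier_vec l" unfolding z_def using restr by simp
  have Cz: "C *\<^sub>v z = rho \<cdot>\<^sub>v z" using E_D(7)[OF w] unfolding CE PF_eigenvector_def rho_def z_def by simp
  have "A' *\<^sub>v z = B' *\<^sub>v (C *\<^sub>v z)" unfolding BC[symmetric] using assoc_mult_mat_vec[OF B'c Cc zc] .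
  also have "\<dots> = rho \<cdot>\<^sub>v (B' *\<^sub>v z)" unfolding Cz using B'c zc by (simp add: mult_mat_vec)
  finally have ABz: "A' *\<^sub>v z = rho \<cdot>\<^sub>v (B' *\<^sub>v z)" .
  have rows: "Ax i w = rho * Bx i w" if i: "i < m" for i
  proof (cases "i \<in> R")
    case True
    then obtain a where a: "a < l" "pr a = i" using pr_surj by auto
    have "(A' *\<^sub>v z) $ a = (rho \<cdot>\<^sub>v (B' *\<^sub>v z)) $ a" using ABz by simp
    then show ?thesis using SVA[OF refl wd a(1)] SVB[OF refl wd a(1)] a B'c unfolding z_def by simp
  next
    case False
    then have iz: "i \<notin> own ` supp w" using R_eq by simp
    have "Ax i w = 0" unfolding Ax_def
    proof (rule sum.neutral, intro ballI)
      fix j assume "j \<in> {..<n}"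
      show "A $$ (i,j) * w $ j = 0"
      proof (cases "j \<in> supp w")
        case True
        have "supp w \<subseteq> {..<n}" using supp_lt[OF wc] by auto
        then have "i \<in> zero_rows B (supp w)" using zero_rows_eq[of "supp w"] iz i by auto
        then show ?thesis using E_D(4)[OF w] True by simp
      next
        case False then show ?thesis using \<open>j \<in> {..<n}\<close> wd unfolding supp_def by simp
      qed
    qed
    moreover have "Bx i w = 0"
      by (rule Bx_zero[OF i]) (use iz supp_iff[OF wc] in auto)
    ultimately show ?thesis by simp
  qed
  have rho0: "rho \<ge> 0"
  proof -
    have "spectral_radius (map_mat complex_of_real C) \<in> norm ` spectrum (map_mat complex_of_real C)"
      by (rule spectral_radius_mem_max(1)[OF _ l0]) (use Cc in simp)
    then show ?thesis unfolding rho_def spec_rad_def by auto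
  qed
  show "A *\<^sub>v w = spec_rad (C_mat A B w) \<cdot>\<^sub>v (B *\<^sub>v w)"
  proof (rule eq_vecI)
    fix i assume "i < dim_vec (spec_rad (C_mat A B w) \<cdot>\<^sub>v (B *\<^sub>v w))"
    then have i: "i < m" using B_carr by simp
    show "(A *\<^sub>v w) $ i = (spec_rad (C_mat A B w) \<cdot>\<^sub>v (B *\<^sub>v w)) $ i"
      using rows[OF i] A_mv[OF i wd] B_mv[OF i wd] i B_carr CE rho_def by simp
  qed (use A_carr B_carr in simp)
  have wn': "w \<in> carrier_vec n" "nonneg_vec w" using wc unfolding cand_def by auto
  have le: "r_fun A B w \<le> ereal rho" unfolding rle[OF wn' rho0] using rows by simp
  obtain j where j: "j \<in> supp w" using supp_ne[OF wc] by auto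
  define i where "i = own j"
  have im: "i < m" unfolding i_def using own supp_lt[OF wc j] by simp
  have Bp: "Bx i w > 0" unfolding i_def using Bx_pos[OF wc j] .
  have "ratio ((A *\<^sub>v w) $ i) ((B *\<^sub>v w) $ i) = ereal rho"
    unfolding A_mv[OF im wd] B_mv[OF im wd] ratio_def using Bp rows[OF im] by simp
  moreover have "ratio ((A *\<^sub>v w) $ i) ((B *\<^sub>v w) $ i) \<le> r_fun A B w"
    unfolding r_fun_eq using im by (intro Max_ge) auto
  ultimately have "ereal rho \<le> r_fun A B w" by simp
  with le show "ereal (spec_rad (C_mat A B w)) = r_fun A B w" unfolding CE rho_def by simp
qed

lemma E_unique: assumes w1: "w1 \<in> E_set A B" and w2: "w2 \<in> E_set A B" and s: "supp w1 = supp w2"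
  shows "w1 = w2"
proof -
  interpret sq A B m n "supp w1" by (rule E_sq[OF w1])
  have wc1: "w1 \<in> cand" and wc2: "w2 \<in> cand" using E_cand w1 w2 by auto
  have CE1: "C_mat A B w1 = C" and CE2: "C_mat A B w2 = C" using C_eq s by auto
  define z1 where "z1 = restrict_supp w1"
  define z2 where "z2 = restrict_supp w2"
  have z1v: "z1 = vec l (\<lambda>b. w1 $ ps b)" unfolding z1_def using restr by simp
  have z2v: "z2 = vec l (\<lambda>b. w2 $ ps b)" unfolding z2_def using restr s by simp
  have zc: "z1 \<in> carrier_vec l" "z2 \<in> carrier_vec l" unfolding z1v z2v by auto
  have zp1: "\<And>b. b < l \<Longrightarrow> z1 $ b > 0" unfolding z1v using ps supp_pos[OF wc1] by simp
  have zp2: "\<And>b. b < l \<Longrightarrow> z2 $ b > 0" unfolding z2v using ps supp_pos[OF wc2] s by simp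
  have C1: "C *\<^sub>v z1 = spec_rad C \<cdot>\<^sub>v z1" using E_D(7)[OF w1] unfolding CE1 PF_eigenvector_def z1_def by simp
  have C2: "C *\<^sub>v z2 = spec_rad C \<cdot>\<^sub>v z2" using E_D(7)[OF w2] unfolding CE2 PF_eigenvector_def z2_def by simp
  have irr: "irreducible_mat C" using E_D(5)[OF w1] CE1 by simp
  obtain t where t: "\<forall>b<l. z2 $ b = t * z1 $ b"
    using pf_unique[OF Cc C_nn irr zc(1) zp1 C1 zc(2) zp2 C2] by blast
  have wt: "w2 $ j = t * w1 $ j" if j: "j < n" for j
  proof (cases "j \<in> supp w1")
    case True
    then obtain b where b: "b < l" "ps b = j" using ps_surj by auto
    then show ?thesis using t z1v z2v by auto
  next
    case False
    then have "w1 $ j = 0" "w2 $ j = 0" using supp_iff[OF wc1] supp_iff[OF wc2] s j by auto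
    then show ?thesis by simp
  qed
  have s1: "(\<Sum>j<n. w1 $ j) = 1" "(\<Sum>j<n. w2 $ j) = 1" using E_D(1) w1 w2 unfolding prob_vecs_def by auto
  have "(\<Sum>j<n. w2 $ j) = t * (\<Sum>j<n. w1 $ j)" using wt by (simp add: sum_distrib_left)
  then have t1: "t = 1" using s1 by simp
  show ?thesis
  proof (rule eq_vecI)
    show "dim_vec w1 = dim_vec w2" using cand_dim wc1 wc2 by simp
    fix j assume "j < dim_vec w2"
    then have "j < n" using cand_dim[OF wc2] by simp
    then show "w1 $ j = w2 $ j" using wt t1 by simp
  qed
qed

lemma E_finite: "finite (E_set A B)"
proof (rule inj_on_finite[of supp _ "Pow {..<n}"])
  show "inj_on supp (E_set A B)" using E_unique by (auto intro: inj_onI)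
  show "supp ` E_set A B \<subseteq> Pow {..<n}" using E_cand supp_lt by blast
qed simp

end

context wn begin

lemma E_min: assumes w: "w \<in> E_set A B" and r: "r_fun A B w = rho_hat A B"
  shows "min_weakly_optimal A B w"
proof -
  have wc: "w \<in> cand" using E_cand[OF w] .
  have wn': "w \<in> carrier_vec n" "nonneg_vec w" using wc unfolding cand_def by auto
  have "r_fun A B w \<le> ereal lam" using r rho_fin by simp
  then have fw: "feas lam w" unfolding feas_def rle[OF wn' lam_nn] .
  have WO: "weakly_optimal A B w" using wc fw WO_iff by simp
  interpret sq A B m n "supp w" by (rule E_sq[OF w])
  have CE: "C_mat A B w = C" using C_eq by simp
  have irr: "irreducible_mat C" using E_D(5)[OF w] CE by simp
  have nosub: False if y': "weakly_optimal A B y'" "supp y' \<subset> supp w" for y'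
  proof -
    have yc: "y' \<in> cand" "feas lam y'" using y'(1) WO_iff by auto
    define T where "T = {b. b < l \<and> ps b \<in> supp y'}"
    obtain j0 where j0: "j0 \<in> supp y'" using supp_ne[OF yc(1)] by auto
    then have "j0 \<in> supp w" using y'(2) by auto
    then obtain c where c: "c < l" "ps c = j0" using ps_surj by auto
    have cT: "c \<in> T" unfolding T_def using c j0 by simp
    obtain j1 where j1: "j1 \<in> supp w" "j1 \<notin> supp y'" using y'(2) by auto
    then obtain b0 where b0: "b0 < l" "ps b0 = j1" using ps_surj by auto
    have b0T: "b0 \<notin> T" unfolding T_def using b0 j1 by simp
    have "(b0, c) \<in> {(a,b). a < dim_row C \<and> b < dim_row C \<and> C $$ (a,b) > 0}\<^sup>*"
      using irr b0(1) c(1) Cc unfolding irreducible_mat_def by auto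
    from cross_edge[OF this b0T cT] obtain a b where
      ab: "(a,b) \<in> {(a,b). a < dim_row C \<and> b < dim_row C \<and> C $$ (a,b) > 0}" "a \<notin> T" "b \<in> T" by blast
    then have a: "a < l" and b: "b < l" and Cab: "C $$ (a,b) > 0" using Cc by auto
    have Apos: "A $$ (own (ps a), ps b) > 0" using C_pos[OF a b] Cab by simp
    define i where "i = own (ps a)"
    have im: "i < m" unfolding i_def using own ps_n[OF a] by simp
    have psb: "ps b \<in> supp y'" using ab(3) unfolding T_def by simp
    have psa: "ps a \<notin> supp y'" using ab(2) a unfolding T_def by simp
    have yd: "dim_vec y'= n" using cand_dim[OF yc(1)] .
    have y'n: "nonneg_vec y'" using yc(1) unfolding cand_def by simp
    have "A $$ (i, ps b) * y' $ ps b > 0" unfolding i_def using Apos supp_pos[OF yc(1) psb] by simp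
    moreover have "A $$ (i, ps b) * y' $ ps b \<le> Ax i y'" unfolding Ax_def
      by (rule member_le_sum) (use ps_n[OF b] im A_nn cand_nn[OF yc(1)] in auto)
    ultimately have Axp: "Ax i y' > 0" by simp
    have "Bx i y' = 0"
    proof (rule Bx_zero[OF im])
      fix j assume j: "j < n" "own j = i"
      show "y' $ j = 0"
      proof (rule ccontr)
        assume "y' $ j \<noteq> 0"
        then have js: "j \<in> supp y'" using supp_iff[OF yc(1)] j by simp
        then have "j \<in> supp w" using y'(2) by auto
        moreover have "ps a \<in> supp w" using ps[OF a] .
        ultimately have "j = ps a" using inj_onD[OF S_inj] j(2) unfolding i_def by blast
        with js psa show False by simp
      qed
    qed
    then show False using yc(2) im Axp unfolding feas_def by fastforce
  qed
  show ?thesis unfolding min_weakly_optimal_def using WO nosub by blast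
qed

lemma E_ne_min: "\<exists>w\<in>E_set A B. r_fun A B w = rho_hat A B"
proof -
  obtain x where x: "weakly_optimal A B x" using attain by blast
  obtain y where y: "weakly_optimal A B y" and ymin: "\<And>y'. weakly_optimal A B y' \<Longrightarrow> card (supp y) \<le> card (supp y')"
    using ex_has_least_nat[of "weakly_optimal A B" x "\<lambda>x. card (supp x)"] x by blast
  have yc: "y \<in> cand" "feas lam y" using y WO_iff by auto
  define w where "w = (1 / (\<Sum>j<n. y $ j)) \<cdot>\<^sub>v y"
  have w: "w \<in> prob_vecs n" "w \<in> cand" "supp w = supp y" "feas lam w"
    using normalize[OF yc(1)] yc(2) unfolding w_def by auto
  have wWO: "weakly_optimal A B w" using w WO_iff by simp
  have mw: "min_weakly_optimal A B w" unfolding min_weakly_optimal_def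
  proof (intro conjI notI wWO)
    assume "\<exists>y'. weakly_optimal A B y' \<and> supp y' \<subset> supp w"
    then obtain y' where y': "weakly_optimal A B y'" "supp y' \<subset> supp w" by blast
    then have "card (supp y') < card (supp y)" using w(3) supp_fin by (metis psubset_card_mono)
    with ymin[OF y'(1)] show False by simp
  qed
  have "w \<in> E_set A B" by (rule minWO_in_E[OF mw w(1)])
  moreover have "r_fun A B w = rho_hat A B" using wWO unfolding weakly_optimal_def by simp
  ultimately show ?thesis by blast
qed

lemma rho_min: "rho_hat A B = Min (r_fun A B ` E_set A B)"
proof -
  obtain w0 where w0: "w0 \<in> E_set A B" "r_fun A B w0 = rho_hat A B" using E_ne_min by blast
  have fin: "finite (r_fun A B ` E_set A B)" "r_fun A B ` E_set A B \<noteq> {}" using E_finite w0 by auto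
  have "Min (r_fun A B ` E_set A B) \<le> rho_hat A B" using w0 fin by (metis Min_le image_eqI)
  moreover have "rho_hat A B \<le> Min (r_fun A B ` E_set A B)"
  proof -
    have "Min (r_fun A B ` E_set A B) \<in> r_fun A B ` E_set A B" by (rule Min_in[OF fin])
    then obtain w where "w \<in> E_set A B" "Min (r_fun A B ` E_set A B) = r_fun A B w" by auto
    then show ?thesis using rho_le E_cand by simp
  qed
  ultimately show ?thesis by simp
qed

lemma main:
  "finite (E_set A B)
    \<and> (\<forall>w\<in>E_set A B. ereal (spec_rad (C_mat A B w)) = r_fun A B w
            \<and> A *\<^sub>v w = spec_rad (C_mat A B w) \<cdot>\<^sub>v (B *\<^sub>v w))
    \<and> rho_hat A B = Min (r_fun A B ` E_set A B)
    \<and> (\<forall>y\<in>prob_vecs n. min_weakly_optimal A B y \<longleftrightarrow>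
            (y \<in> E_set A B \<and> r_fun A B y = Min (r_fun A B ` E_set A B)))
    \<and> (\<forall>y. min_weakly_optimal A B y \<longrightarrow> weak_GPF_eigenvector A B y)"
proof (intro conjI ballI allI impI)
  show "finite (E_set A B)" by (rule E_finite)
  fix w assume "w \<in> E_set A B"
  then show "ereal (spec_rad (C_mat A B w)) = r_fun A B w"
    "A *\<^sub>v w = spec_rad (C_mat A B w) \<cdot>\<^sub>v (B *\<^sub>v w)" using E_props by auto
next
  show "rho_hat A B = Min (r_fun A B ` E_set A B)" by (rule rho_min)
next
  fix y assume yp: "y \<in> prob_vecs n"
  show "min_weakly_optimal A B y \<longleftrightarrow> (y \<in> E_set A B \<and> r_fun A B y = Min (r_fun A B ` E_set A B))"
  proof
    assume mw: "min_weakly_optimal A B y"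
    then have "y \<in> E_set A B" using minWO_in_E yp by blast
    moreover have "r_fun A B y = rho_hat A B" using mw unfolding min_weakly_optimal_def weakly_optimal_def by simp
    ultimately show "y \<in> E_set A B \<and> r_fun A B y = Min (r_fun A B ` E_set A B)" using rho_min by simp
  next
    assume "y \<in> E_set A B \<and> r_fun A B y = Min (r_fun A B ` E_set A B)"
    then show "min_weakly_optimal A B y" using E_min rho_min by simp
  qed
next
  fix y assume mw: "min_weakly_optimal A B y"
  note yy = minWO_D[OF mw]
  have yd: "dim_vec y = n" using cand_dim[OF yy(1)] .
  have "A *\<^sub>v y = lam \<cdot>\<^sub>v (B *\<^sub>v y)"
  proof (rule eq_vecI)
    fix i assume "i < dim_vec (lam \<cdot>\<^sub>v (B *\<^sub>v y))"
    then have i: "i < m" using B_carr by simp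
    show "(A *\<^sub>v y) $ i = (lam \<cdot>\<^sub>v (B *\<^sub>v y)) $ i"
      using tight[OF mw i] A_mv[OF i yd] B_mv[OF i yd] i B_carr by simp
  qed (use A_carr B_carr in simp)
  then show "weak_GPF_eigenvector A B y"
    unfolding weak_GPF_eigenvector_def using yy(1) rho_fin A_carr unfolding cand_def by auto
qed

end

theorem theorem6p2:
  fixes A B :: "real mat" and m n :: nat
  assumes "m > 0"
    and "WN_pair m n A B"
  shows "finite (E_set A B)
    \<and> (\<forall>w\<in>E_set A B. ereal (spec_rad (C_mat A B w)) = r_fun A B w
            \<and> A *\<^sub>v w = spec_rad (C_mat A B w) \<cdot>\<^sub>v (B *\<^sub>v w))
    \<and> rho_hat A B = Min (r_fun A B ` E_set A B)
    \<and> (\<forall>y\<in>prob_vecs n. min_weakly_optimal A B y \<longleftrightarrow>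
            (y \<in> E_set A B \<and> r_fun A B y = Min (r_fun A B ` E_set A B)))
    \<and> (\<forall>y. min_weakly_optimal A B y \<longrightarrow> weak_GPF_eigenvector A B y)"
proof -
  interpret wn A B m n by unfold_locales (use assms in auto)
  show ?thesis by (rule main)
qed

end
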